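(* There are absolute constants $c_1,c_2,C>0$ such that the following holds. Let $M\in\mathbb{N}$, $N_0>0$, let ${\bf C}_{{\bf h}}\in\mathbb{C}^{M\times M}$ be Hermitian positive semidefinite, and set ${\bf C}_{{\bf y}}={\bf C}_{{\bf h}}+N_0\mathbf{I}_M$ and ${\bf C}_{{\bf r}}=\mathcal{P}_{\mathrm{arcsine}}({\bf C}_{{\bf y}})$. Let $\theta\in(0,1)$ and assume $$\left|\left[{\rm diag}({\bf C}_{{\bf y}})^{-1/2}{\bf C}_{{\bf y}}\,{\rm diag}({\bf C}_{{\bf y}})^{-1/2}\right]_{i,j}\right|\le 1-\theta\quad\text{for all } i\neq j,$$ $$\min_{i\in[M]}|[{\bf C}_{{\bf y}}]_{i,i}|\ge\theta,\qquad \lambda_{\min}({\bf C}_{{\bf r}})\ge\theta .$$ Let $\widehat{{\bf C}}_{{\bf y}}\in\mathbb{C}^{M\times M}$ be Hermitian and let $\varepsilon_{\sf F},\varepsilon_\infty>0$ satisfy $\|\widehat{{\bf C}}_{{\bf y}}-{\bf C}_{{\bf y}}\|_{\sf F}<\varepsilon_{\sf F}$, $\|\widehat{{\bf C}}_{{\bf y}}-{\bf C}_{{\bf y}}\|_{\infty}<\varepsilon_\infty$, and $$\varepsilon_\infty\le c_1\min\left\{\frac{\varepsilon_{\sf F}}{\|{\bf C}_{{\bf y}}\|_{\sf F}},\ \frac{\theta^3}{\|{\bf C}_{{\bf y}}\|_\infty},\ \theta,\ 1\right\},\qquad \varepsilon_{\sf F}\le c_2\min\left\{\theta^4,\ \frac{\theta^6\|{\bf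 C}_{{\bf h}}\|_{\sf F}}{\max\{1,\|{\bf C}_{{\bf h}}\|\}\,\|{\bf C}_{{\bf y}}\|}\right\}.$$ Then the quantities $\widehat{{\bf A}}$, $\widehat{{\bf C}}_{{\bf r}}^{-1}$ below are well defined, and for any random vector ${\bf r}\in\mathbb{C}^M$ with $\mathbb{E}[{\bf r}{\bf r}^{\sf H}]={\bf C}_{{\bf r}}$, $$\mathbb{E}\left[\|\widehat{{\bf h}}-\widehat{{\bf h}}^{\rm BLM}\|_2^2\right]\le C\,\theta^{-6}\max\{1,\|{\bf C}_{{\bf h}}\|\}\,\|{\bf C}_{{\bf h}}\|_{\sf F}\,\varepsilon_{\sf F},$$ where the expectation is with respect to ${\bf r}$ and $$\widehat{{\bf h}}^{\rm BLM}={\bf C}_{{\bf h}}{\bf A}^{\sf H}{\bf C}_{{\bf r}}^{-1}{\bf r},\qquad \widehat{{\bf h}}=\widehat{{\bf C}}_{{\bf h}}\widehat{{\bf A}}^{\sf H}\widehat{{\bf C}}_{{\bf r}}^{-1}{\bf r},$$ with ${\bf A}=\sqrt{2/\pi}\,{\rm diag}({\bf C}_{{\bf y}})^{-1/2}$, $\widehat{{\bf C}}_{{\bf h}}=\widehat{{\bf C}}_{{\bf y}}-N_0\mathbf{I}_M$, $\widehat{{\bf A}}=\sqrt{2/\pi}\,{\rm diag}(\widehat{{\bf C}}_{{\bf y}})^{-1/2}$, $\widehat{{\bf C}}_{{\bf r}}=\mathcal{P}_{\mathrm{arcsine}}(\widehat{{\bf C}}_{{\bf y}})$.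
   Context: For a square matrix ${\bf B}$, ${\rm diag}({\bf B})$ is the diagonal matrix with the diagonal of ${\bf B}$. $\|\cdot\|_{\sf F}$ is the Frobenius norm, $\|\cdot\|$ the operator (spectral) norm, $\|\cdot\|_\infty$ the maximum absolute entry, $\lambda_{\min}$ the smallest eigenvalue. For a Hermitian matrix ${\bf B}$ with positive diagonal, with ${\bf D}={\rm diag}({\bf B})$, $$\mathcal{P}_{\mathrm{arcsine}}({\bf B})=\frac{2}{\pi}\Big(\arcsin\big({\bf D}^{-1/2}\,\mathrm{Re}({\bf B})\,{\bf D}^{-1/2}\big)+j\,\arcsin\big({\bf D}^{-1/2}\,\mathrm{Im}({\bf B})\,{\bf D}^{-1/2}\big)\Big),$$ where $\arcsin$ is applied entrywise and $\mathrm{Re},\mathrm{Im}$ are taken entrywise. *)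

theory Defs
  imports "HOL-Probability.Probability" "Jordan_Normal_Form.Schur_Decomposition"
begin

definition hermitian_mat :: "complex mat \<Rightarrow> bool" where
  "hermitian_mat A \<longleftrightarrow> square_mat A \<and> mat_adjoint A = A"

definition psd_mat :: "complex mat \<Rightarrow> bool" where
  "psd_mat A \<longleftrightarrow> hermitian_mat A \<and>
     (\<forall>x \<in> carrier_vec (dim_row A). Re (conjugate x \<bullet> (A *\<^sub>v x)) \<ge> 0)"

definition diag_inv_sqrt :: "complex mat \<Rightarrow> complex mat" where
  "diag_inv_sqrt B = mat (dim_row B) (dim_row B)
     (\<lambda>(i,j). if i = j then complex_of_real (1 / sqrt (Re (B $$ (i,i)))) else 0)"

text \<open>The arcsine map, entrywise:
  2/pi (arcsin(D^-1/2 Re(B) D^-1/2) + j arcsin(D^-1/2 Im(B) D^-1/2)), D = diag(B).\<close>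
definition P_arcsine :: "complex mat \<Rightarrow> complex mat" where
  "P_arcsine B = mat (dim_row B) (dim_row B) (\<lambda>(i,j).
     complex_of_real (2 / pi) *
       (complex_of_real (arcsin (Re (B $$ (i,j)) / (sqrt (Re (B $$ (i,i))) * sqrt (Re (B $$ (j,j)))))) +
        \<i> * complex_of_real (arcsin (Im (B $$ (i,j)) / (sqrt (Re (B $$ (i,i))) * sqrt (Re (B $$ (j,j))))))))"

definition fro_norm :: "complex mat \<Rightarrow> real" where
  "fro_norm A = sqrt (\<Sum>i<dim_row A. \<Sum>j<dim_col A. (cmod (A $$ (i,j)))\<^sup>2)"

definition max_norm :: "complex mat \<Rightarrow> real" where
  "max_norm A = Max (insert 0 {cmod (A $$ (i,j)) | i j. i < dim_row A \<and> j < dim_col A})"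

definition vec_norm :: "complex vec \<Rightarrow> real" where
  "vec_norm v = sqrt (\<Sum>i<dim_vec v. (cmod (v $ i))\<^sup>2)"

definition op_norm :: "complex mat \<Rightarrow> real" where
  "op_norm A = Sup {vec_norm (A *\<^sub>v x) | x. x \<in> carrier_vec (dim_col A) \<and> vec_norm x \<le> 1}"

text \<open>Smallest eigenvalue of a Hermitian matrix (its eigenvalues are real).\<close>
definition lambda_min :: "complex mat \<Rightarrow> real" where
  "lambda_min A = Min (Re ` {k. eigenvalue A k})"

text \<open>Matrix inverse (meaningful for invertible matrices).\<close>
definition mat_inv :: "complex mat \<Rightarrow> complex mat" where
  "mat_inv A = (SOME B. inverts_mat A B \<and> inverts_mat B A)"

end

theory Submission
  imports Defs
begin

definition nsq :: "complex vec \<Rightarrow> real" where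
  "nsq x = (\<Sum>i<dim_vec x. (cmod (x$i))\<^sup>2)"
definition fs :: "complex mat \<Rightarrow> real" where
  "fs A = (\<Sum>i<dim_row A. \<Sum>j<dim_col A. (cmod (A$$(i,j)))\<^sup>2)"
definition qf :: "complex mat \<Rightarrow> complex vec \<Rightarrow> complex" where
  "qf A x = (\<Sum>i<dim_vec x. \<Sum>j<dim_vec x. cnj (x$i) * A$$(i,j) * x$j)"

lemma nsq_nonneg[simp]: "0 \<le> nsq x"
  unfolding nsq_def by (intro sum_nonneg) auto
lemma fs_nonneg[simp]: "0 \<le> fs A"
  unfolding fs_def by (intro sum_nonneg) auto
lemma vec_norm_nsq: "vec_norm x = sqrt (nsq x)"
  unfolding vec_norm_def nsq_def ..
lemma fro_norm_fs: "fro_norm A = sqrt (fs A)"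
  unfolding fro_norm_def fs_def ..

lemma cs_complex:
  "(cmod (\<Sum>j\<in>J. a j * b j))\<^sup>2 \<le> (\<Sum>j\<in>J. (cmod (a j))\<^sup>2) * (\<Sum>j\<in>J. (cmod (b j))\<^sup>2)"
proof -
  have "cmod (\<Sum>j\<in>J. a j * b j) \<le> (\<Sum>j\<in>J. cmod (a j) * cmod (b j))"
    by (metis (no_types, lifting) norm_mult norm_sum sum.cong)
  hence "(cmod (\<Sum>j\<in>J. a j * b j))\<^sup>2 \<le> (\<Sum>j\<in>J. cmod (a j) * cmod (b j))\<^sup>2"
    by (intro power_mono) auto
  also have "\<dots> \<le> (\<Sum>j\<in>J. (cmod (a j))\<^sup>2) * (\<Sum>j\<in>J. (cmod (b j))\<^sup>2)"
    by (rule Cauchy_Schwarz_ineq_sum)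
  finally show ?thesis .
qed

lemma mult_vec_nsq:
  assumes A: "A \<in> carrier_mat m n" and x: "x \<in> carrier_vec n"
  shows "nsq (A *\<^sub>v x) \<le> fs A * nsq x"
proof -
  have "nsq (A *\<^sub>v x) = (\<Sum>i<m. (cmod (\<Sum>j<n. A$$(i,j) * x$j))\<^sup>2)"
    unfolding nsq_def using A x
    by (intro sum.cong) (auto simp: mult_mat_vec_def scalar_prod_def atLeast0LessThan)
  also have "\<dots> \<le> (\<Sum>i<m. (\<Sum>j<n. (cmod (A$$(i,j)))\<^sup>2) * (\<Sum>j<n. (cmod (x$j))\<^sup>2))"
    by (intro sum_mono cs_complex)
  also have "\<dots> = fs A * nsq x"
    using A x unfolding fs_def nsq_def by (simp add: sum_distrib_right)
  finally show ?thesis .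
qed

lemma cs_vec:
  assumes "x \<in> carrier_vec n" "y \<in> carrier_vec n"
  shows "(cmod (\<Sum>i<n. cnj (x$i) * y$i))\<^sup>2 \<le> nsq x * nsq y"
  using cs_complex[of "\<lambda>i. cnj (x$i)" "\<lambda>i. y$i" "{..<n}"] assms
  unfolding nsq_def by simp

lemma qf_alt:
  assumes A: "A \<in> carrier_mat n n" and x: "x \<in> carrier_vec n"
  shows "qf A x = (\<Sum>i<n. cnj (x$i) * (A *\<^sub>v x)$i)"
  unfolding qf_def using A x
  by (auto simp: mult_mat_vec_def scalar_prod_def atLeast0LessThan sum_distrib_left mult.assoc
      intro!: sum.cong)

lemma qf_bound:
  assumes A: "A \<in> carrier_mat n n" and x: "x \<in> carrier_vec n"
  shows "(cmod (qf A x))\<^sup>2 \<le> fs A * (nsq x)\<^sup>2"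
proof -
  have "(cmod (qf A x))\<^sup>2 \<le> nsq x * nsq (A *\<^sub>v x)"
    unfolding qf_alt[OF A x] by (rule cs_vec[OF x]) (use A x in auto)
  also have "\<dots> \<le> nsq x * (fs A * nsq x)"
    by (intro mult_left_mono mult_vec_nsq[OF A x]) auto
  finally show ?thesis by (simp add: power2_eq_square mult_ac)
qed

definition bf :: "complex mat \<Rightarrow> complex vec \<Rightarrow> complex vec \<Rightarrow> complex" where
  "bf A x y = (\<Sum>i<dim_vec x. \<Sum>j<dim_vec x. cnj (x$i) * A$$(i,j) * y$j)"

lemma qf_add_scaled:
  assumes x: "x \<in> carrier_vec n" and y: "y \<in> carrier_vec n"
  shows "qf K (x + complex_of_real t \<cdot>\<^sub>v y) = qf K x + of_real t * bf K x y + of_real t * bf K y x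
     + of_real (t^2) * qf K y"
proof -
  have "qf K (x + complex_of_real t \<cdot>\<^sub>v y) =
    (\<Sum>i<n. \<Sum>j<n. (cnj (x$i) + of_real t * cnj (y$i)) * K$$(i,j) * (x$j + of_real t * y$j))"
    unfolding qf_def using x y by (auto intro!: sum.cong)
  also have "\<dots> = (\<Sum>i<n. \<Sum>j<n. cnj (x$i) * K$$(i,j) * x$j + of_real t * (cnj (x$i) * K$$(i,j) * y$j)
      + of_real t * (cnj (y$i) * K$$(i,j) * x$j) + of_real (t^2) * (cnj (y$i) * K$$(i,j) * y$j))"
    by (intro sum.cong refl) (simp add: algebra_simps power2_eq_square)
  also have "\<dots> = qf K x + of_real t * bf K x y + of_real t * bf K y x + of_real (t^2) * qf K y"
    unfolding qf_def bf_def using x y by (simp add: sum.distrib sum_distrib_left)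
  finally show ?thesis .
qed

lemma discr:
  fixes a b c :: real
  assumes c: "0 \<le> c" and H: "\<And>t. 0 \<le> a + 2*b*t + c*t^2"
  shows "b^2 \<le> a * c"
proof (cases "c = 0")
  case True
  have "b = 0"
  proof (rule ccontr)
    assume b: "b \<noteq> 0"
    have "0 \<le> a + 2*b*(-(\<bar>a\<bar>+1)/(2*b)) + c*(-(\<bar>a\<bar>+1)/(2*b))^2" by (rule H)
    also have "\<dots> = a - (\<bar>a\<bar>+1)" using b True by (simp add: field_simps)
    finally show False by linarith
  qed
  thus ?thesis using True by simp
next
  case False
  hence cp: "c > 0" using c by simp
  have "0 \<le> a + 2*b*(-b/c) + c*(-b/c)^2" by (rule H)
  also have "\<dots> = a - b^2/c" using cp by (simp add: field_simps power2_eq_square)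
  finally have "b^2/c \<le> a" by simp
  thus ?thesis using cp by (simp add: field_simps)
qed

lemma det_ne0_inv:
  assumes A: "(A::complex mat) \<in> carrier_mat n n" and d: "det A \<noteq> 0"
  shows "\<exists>B\<in>carrier_mat n n. A * B = 1\<^sub>m n \<and> B * A = 1\<^sub>m n"
  using det_non_zero_imp_unit[OF A d, of undefined] unfolding Units_def ring_mat_def by auto

lemma inj_imp_inv:
  assumes A: "(A::complex mat) \<in> carrier_mat n n"
    and inj: "\<And>v. v \<in> carrier_vec n \<Longrightarrow> A *\<^sub>v v = 0\<^sub>v n \<Longrightarrow> v = 0\<^sub>v n"
  shows "\<exists>B\<in>carrier_mat n n. A * B = 1\<^sub>m n \<and> B * A = 1\<^sub>m n"
proof -
  have "det A \<noteq> 0" using det_0_iff_vec_prod_zero[OF A] inj by blast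
  thus ?thesis by (rule det_ne0_inv[OF A])
qed

lemma mv_entry:
  assumes "A \<in> carrier_mat m n" "x \<in> carrier_vec n" "i < m"
  shows "(A *\<^sub>v x)$i = (\<Sum>j<n. A$$(i,j) * x$j)"
  using assms by (auto simp: scalar_prod_def atLeast0LessThan intro!: sum.cong)

lemma nsq_zero_imp:
  assumes x: "x \<in> carrier_vec n" and z: "nsq x = 0" shows "x = 0\<^sub>v n"
proof -
  have "\<forall>i\<in>{..<n}. (cmod (x$i))\<^sup>2 = 0"
    using z x unfolding nsq_def by (subst sum_nonneg_eq_0_iff[symmetric]) auto
  thus ?thesis using x by (intro eq_vecI) auto
qed

lemma qf_zero[simp]: "qf K (0\<^sub>v n) = 0"
  unfolding qf_def by simp

lemma qf_smult:
  assumes x: "x \<in> carrier_vec n"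
  shows "qf K (c \<cdot>\<^sub>v x) = cnj c * c * qf K x"
  unfolding qf_def using x by (simp add: sum_distrib_left mult_ac)

lemma nsq_smult: "nsq (c \<cdot>\<^sub>v x) = (cmod c)\<^sup>2 * nsq x"
  unfolding nsq_def by (simp add: sum_distrib_left norm_mult power_mult_distrib)

lemma bf_herm:
  assumes x: "x \<in> carrier_vec n" and y: "y \<in> carrier_vec n"
    and herm: "\<And>i j. i < n \<Longrightarrow> j < n \<Longrightarrow> K$$(j,i) = cnj (K$$(i,j))"
  shows "cnj (bf K x y) = bf K y x"
proof -
  have "cnj (bf K x y) = (\<Sum>i<n. \<Sum>j<n. x$i * cnj (K$$(i,j)) * cnj (y$j))"
    unfolding bf_def using x by simp
  also have "\<dots> = (\<Sum>i<n. \<Sum>j<n. x$i * K$$(j,i) * cnj (y$j))"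
    by (intro sum.cong refl) (simp add: herm[symmetric])
  also have "\<dots> = (\<Sum>j<n. \<Sum>i<n. cnj (y$j) * K$$(j,i) * x$i)"
    by (subst sum.swap) (simp add: mult_ac)
  also have "\<dots> = bf K y x" unfolding bf_def using y by simp
  finally show ?thesis .
qed

lemma qf_herm:
  assumes x: "x \<in> carrier_vec n"
    and herm: "\<And>i j. i < n \<Longrightarrow> j < n \<Longrightarrow> K$$(j,i) = cnj (K$$(i,j))"
  shows "cnj (qf K x) = qf K x"
  using bf_herm[OF x x herm] unfolding bf_def qf_def .

lemma cnj_mult_self: "cnj z * z = complex_of_real ((cmod z)\<^sup>2)"
  by (metis complex_norm_square mult.commute)

lemma bf_self_image:
  assumes K: "K \<in> carrier_mat n n" and x: "x \<in> carrier_vec n"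
  shows "bf K (K *\<^sub>v x) x = of_real (nsq (K *\<^sub>v x))"
proof -
  have "bf K (K *\<^sub>v x) x = (\<Sum>i<n. cnj ((K *\<^sub>v x)$i) * (K *\<^sub>v x)$i)"
    unfolding bf_def using K x
    by (auto simp: mult_mat_vec_def scalar_prod_def atLeast0LessThan sum_distrib_left mult.assoc
      intro!: sum.cong)
  also have "\<dots> = of_real (nsq (K *\<^sub>v x))"
    unfolding nsq_def cnj_mult_self using K by simp
  finally show ?thesis .
qed

lemma qfb:
  assumes K: "K \<in> carrier_mat n n" and y: "y \<in> carrier_vec n"
  shows "cmod (qf K y) \<le> sqrt (fs K) * nsq y"
proof -
  have "cmod (qf K y) = sqrt ((cmod (qf K y))\<^sup>2)" by simp
  also have "\<dots> \<le> sqrt (fs K * (nsq y)\<^sup>2)" by (intro real_sqrt_le_mono qf_bound[OF K y])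
  also have "\<dots> = sqrt (fs K) * nsq y" by (simp add: real_sqrt_mult)
  finally show ?thesis .
qed

lemma spectral_lb:
  fixes K :: "complex mat" and \<theta> :: real
  assumes K: "K \<in> carrier_mat n n" and n: "0 < n"
    and herm: "\<And>i j. i < n \<Longrightarrow> j < n \<Longrightarrow> K$$(j,i) = cnj (K$$(i,j))"
    and ev: "\<And>k. eigenvalue K k \<Longrightarrow> \<theta> \<le> Re k"
    and x: "x \<in> carrier_vec n"
  shows "\<theta> * nsq x \<le> Re (qf K x)"
proof -
  define S where "S = {Re (qf K y) | y. y \<in> carrier_vec n \<and> nsq y = 1}"
  have e0: "unit_vec n 0 \<in> carrier_vec n" "nsq (unit_vec n 0) = 1"
  proof -
    show "unit_vec n 0 \<in> carrier_vec n" by simp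
    have "nsq (unit_vec n 0) = (\<Sum>i<n. if i = 0 then 1 else 0)"
      unfolding nsq_def by (intro sum.cong) auto
    also have "\<dots> = 1" using n by (simp add: sum.delta)
    finally show "nsq (unit_vec n 0) = 1" .
  qed
  have Sne: "S \<noteq> {}" using e0 unfolding S_def by blast
  have Sbdd: "bdd_below S"
  proof
    fix s assume "s \<in> S"
    then obtain y where y: "y \<in> carrier_vec n" "nsq y = 1" and s: "s = Re (qf K y)"
      unfolding S_def by blast
    have "cmod (qf K y) \<le> sqrt (fs K)" using qfb[OF K y(1)] y(2) by simp
    thus "- sqrt (fs K) \<le> s" unfolding s using abs_Re_le_cmod[of "qf K y"] by linarith
  qed
  define m where "m = Inf S"
  have mS: "m \<le> Re (qf K y)" if y: "y \<in> carrier_vec n" "nsq y = 1" for y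
    unfolding m_def by (rule cInf_lower[OF _ Sbdd]) (use y in \<open>auto simp: S_def\<close>)
  have mall: "m * nsq y \<le> Re (qf K y)" if y: "y \<in> carrier_vec n" for y
  proof (cases "nsq y = 0")
    case True
    thus ?thesis using nsq_zero_imp[OF y True] by simp
  next
    case False
    hence pos: "0 < nsq y" using nsq_nonneg[of y] by linarith
    define c where "c = complex_of_real (1 / sqrt (nsq y))"
    have z: "c \<cdot>\<^sub>v y \<in> carrier_vec n" using y by simp
    have cm: "cmod c = 1 / sqrt (nsq y)" unfolding c_def using pos by (simp add: norm_divide)
    have "nsq (c \<cdot>\<^sub>v y) = 1" unfolding nsq_smult cm using pos
      by (simp add: power_divide)
    from mS[OF z this] have "m \<le> Re (qf K (c \<cdot>\<^sub>v y))" .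
    also have "qf K (c \<cdot>\<^sub>v y) = of_real (1 / nsq y) * qf K y"
    proof -
      have "cnj c * c = complex_of_real ((1 / sqrt (nsq y))^2)"
        unfolding c_def using pos by (simp add: power2_eq_square flip: of_real_mult)
      also have "(1 / sqrt (nsq y))^2 = 1 / nsq y" using pos by (simp add: power_divide)
      finally show ?thesis unfolding qf_smult[OF y] by simp
    qed
    also have "Re \<dots> = Re (qf K y) / nsq y" by simp
    finally show ?thesis using pos by (simp add: field_simps)
  qed
  define H where "H = K - complex_of_real m \<cdot>\<^sub>m 1\<^sub>m n"
  have H: "H \<in> carrier_mat n n" unfolding H_def using K by auto
  have Hent: "H$$(i,j) = K$$(i,j) - (if i = j then of_real m else 0)" if "i < n" "j < n" for i j
    unfolding H_def using K that by auto
  have Hherm: "H$$(j,i) = cnj (H$$(i,j))" if "i < n" "j < n" for i j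
    using that by (simp add: Hent herm[OF that])
  have qfH: "qf H y = qf K y - of_real (m * nsq y)" if y: "y \<in> carrier_vec n" for y
  proof -
    have "qf H y = (\<Sum>i<n. \<Sum>j<n. cnj (y$i) * K$$(i,j) * y$j
        - (if i = j then of_real m * (cnj (y$i) * y$j) else 0))"
      unfolding qf_def using y by (auto simp: Hent algebra_simps intro!: sum.cong)
    also have "\<dots> = qf K y - (\<Sum>i<n. of_real m * (cnj (y$i) * y$i))"
      unfolding qf_def using y by (simp add: sum_subtractf sum.delta cong: if_cong)
    also have "(\<Sum>i<n. of_real m * (cnj (y$i) * y$i)) = of_real (m * nsq y)"
      unfolding nsq_def cnj_mult_self using y by (simp add: sum_distrib_left)
    finally show ?thesis .
  qed
  have Hpos: "0 \<le> Re (qf H y)" if y: "y \<in> carrier_vec n" for y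
    using mall[OF y] qfH[OF y] by simp
  have "\<exists>v. v \<in> carrier_vec n \<and> v \<noteq> 0\<^sub>v n \<and> H *\<^sub>v v = 0\<^sub>v n"
  proof (rule ccontr)
    assume "\<not> ?thesis"
    then obtain G where G: "G \<in> carrier_mat n n" "G * H = 1\<^sub>m n"
      using inj_imp_inv[OF H] by blast
    have key: "1 \<le> fs G * sqrt (fs H) * Re (qf H y)" if y: "y \<in> carrier_vec n" "nsq y = 1" for y
    proof -
      define z where "z = H *\<^sub>v y"
      have z: "z \<in> carrier_vec n" unfolding z_def using H y by simp
      have "G *\<^sub>v z = y" unfolding z_def
        using assoc_mult_mat_vec[OF G(1) H y(1), symmetric] G(2) y(1) by simp
      hence one: "1 \<le> fs G * nsq z" using mult_vec_nsq[OF G(1) z] y by simp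
      have bzy: "bf H z y = of_real (nsq z)" unfolding z_def by (rule bf_self_image[OF H y(1)])
      have byz: "bf H y z = of_real (nsq z)"
        using bf_herm[OF z y(1) Hherm] bzy by (metis complex_cnj_complex_of_real)
      have disc: "(nsq z)\<^sup>2 \<le> Re (qf H y) * Re (qf H z)"
      proof (rule discr)
        show "0 \<le> Re (qf H z)" by (rule Hpos[OF z])
        fix t :: real
        have "0 \<le> Re (qf H (y + complex_of_real t \<cdot>\<^sub>v z))" using Hpos y z by simp
        also have "\<dots> = Re (qf H y) + 2 * nsq z * t + Re (qf H z) * t\<^sup>2"
          unfolding qf_add_scaled[OF y(1) z] bzy byz by simp
        finally show "0 \<le> Re (qf H y) + 2 * nsq z * t + Re (qf H z) * t\<^sup>2" .
      qed
      have "Re (qf H z) \<le> sqrt (fs H) * nsq z"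
        using qfb[OF H z] abs_Re_le_cmod[of "qf H z"] by linarith
      hence "(nsq z)\<^sup>2 \<le> Re (qf H y) * (sqrt (fs H) * nsq z)"
        using disc Hpos[OF y(1)] by (meson mult_left_mono order_trans)
      moreover have zpos: "0 < nsq z" using one nsq_nonneg[of z]
        by (metis mult_zero_right not_less_iff_gr_or_eq not_one_le_zero order_le_less)
      ultimately have "nsq z \<le> Re (qf H y) * sqrt (fs H)"
        by (simp add: power2_eq_square mult_ac)
      hence "fs G * nsq z \<le> fs G * (Re (qf H y) * sqrt (fs H))"
        by (intro mult_left_mono) auto
      with one show ?thesis by (simp add: mult_ac)
    qed
    define P where "P = fs G * sqrt (fs H)"
    have P0: "0 < P"
    proof -
      have "0 \<le> P" unfolding P_def by simp
      moreover have "P \<noteq> 0" using key[OF e0] unfolding P_def by auto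
      ultimately show ?thesis by simp
    qed
    have "m + 1/P \<le> s" if s: "s \<in> S" for s
    proof -
      obtain y where y: "y \<in> carrier_vec n" "nsq y = 1" and s: "s = Re (qf K y)"
        using s unfolding S_def by blast
      have "1 \<le> P * (s - m)" using key[OF y] qfH[OF y(1)] y(2) s unfolding P_def by simp
      hence "1/P \<le> s - m" using P0 by (simp add: field_simps)
      thus ?thesis by simp
    qed
    hence "m + 1/P \<le> Inf S" by (intro cInf_greatest[OF Sne])
    thus False using P0 unfolding m_def by simp
  qed
  then obtain v where v: "v \<in> carrier_vec n" "v \<noteq> 0\<^sub>v n" "H *\<^sub>v v = 0\<^sub>v n" by blast
  have "K *\<^sub>v v = complex_of_real m \<cdot>\<^sub>v v"
  proof (rule eq_vecI)
    fix i assume i: "i < dim_vec (complex_of_real m \<cdot>\<^sub>v v)"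
    hence i: "i < n" using v by simp
    have "0 = (H *\<^sub>v v)$i" using v i by simp
    also have "\<dots> = (\<Sum>j<n. H$$(i,j) * v$j)" by (rule mv_entry[OF H v(1) i])
    also have "\<dots> = (\<Sum>j<n. K$$(i,j) * v$j - (if i = j then of_real m * v$j else 0))"
      using i by (intro sum.cong refl) (simp add: Hent algebra_simps)
    also have "\<dots> = (\<Sum>j<n. K$$(i,j) * v$j) - of_real m * v$i"
      using i by (simp add: sum_subtractf sum.delta cong: if_cong)
    also have "(\<Sum>j<n. K$$(i,j) * v$j) = (K *\<^sub>v v)$i" by (rule mv_entry[OF K v(1) i, symmetric])
    finally show "(K *\<^sub>v v) $ i = (complex_of_real m \<cdot>\<^sub>v v) $ i" using i v by simp
  qed (use K v in auto)
  hence "eigenvalue K (of_real m)" unfolding eigenvalue_def eigenvector_def using K v by auto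
  hence "\<theta> \<le> m" using ev by force
  thus ?thesis using mall[OF x] nsq_nonneg[of x] by (smt (verit) mult_right_mono)
qed

lemma vec_norm_le1: "vec_norm x \<le> 1 \<longleftrightarrow> nsq x \<le> 1"
  unfolding vec_norm_nsq by simp

lemma op_norm_bdd:
  assumes A: "A \<in> carrier_mat m n"
  shows "bdd_above {vec_norm (A *\<^sub>v x) | x. x \<in> carrier_vec (dim_col A) \<and> vec_norm x \<le> 1}"
proof (rule bdd_aboveI)
  fix s assume "s \<in> {vec_norm (A *\<^sub>v x) | x. x \<in> carrier_vec (dim_col A) \<and> vec_norm x \<le> 1}"
  then obtain x where x: "x \<in> carrier_vec n" "nsq x \<le> 1" and s: "s = vec_norm (A *\<^sub>v x)"
    using A vec_norm_le1 by auto
  have "nsq (A *\<^sub>v x) \<le> fs A * nsq x" by (rule mult_vec_nsq[OF A x(1)])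
  also have "\<dots> \<le> fs A" using x(2) by (simp add: mult_left_le)
  finally show "s \<le> sqrt (fs A)" unfolding s vec_norm_nsq by simp
qed

lemma op_norm_ge:
  assumes A: "A \<in> carrier_mat m n" and x: "x \<in> carrier_vec n" "nsq x \<le> 1"
  shows "vec_norm (A *\<^sub>v x) \<le> op_norm A"
  unfolding op_norm_def
  by (rule cSup_upper[OF _ op_norm_bdd[OF A]]) (use A x vec_norm_le1 in auto)

lemma op_norm_nonneg:
  assumes A: "A \<in> carrier_mat m n"
  shows "0 \<le> op_norm A"
proof -
  have "0 \<le> vec_norm (A *\<^sub>v 0\<^sub>v n)" unfolding vec_norm_nsq by simp
  also have "\<dots> \<le> op_norm A" by (rule op_norm_ge[OF A]) (auto simp: nsq_def)
  finally show ?thesis .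
qed

lemma op_norm_le_fro:
  assumes A: "A \<in> carrier_mat m n"
  shows "op_norm A \<le> fro_norm A"
  unfolding op_norm_def
proof (rule cSup_least)
  show "{vec_norm (A *\<^sub>v x) |x. x \<in> carrier_vec (dim_col A) \<and> vec_norm x \<le> 1} \<noteq> {}"
    using A by (auto intro!: exI[of _ "0\<^sub>v n"] simp: vec_norm_nsq nsq_def)
  fix s assume "s \<in> {vec_norm (A *\<^sub>v x) | x. x \<in> carrier_vec (dim_col A) \<and> vec_norm x \<le> 1}"
  then obtain x where x: "x \<in> carrier_vec n" "nsq x \<le> 1" and s: "s = vec_norm (A *\<^sub>v x)"
    using A vec_norm_le1 by auto
  have "nsq (A *\<^sub>v x) \<le> fs A * nsq x" by (rule mult_vec_nsq[OF A x(1)])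
  also have "\<dots> \<le> fs A" using x(2) by (simp add: mult_left_le)
  finally show "s \<le> fro_norm A" unfolding s vec_norm_nsq fro_norm_fs by simp
qed

lemma op_norm_bound:
  assumes A: "A \<in> carrier_mat m n" and x: "x \<in> carrier_vec n"
  shows "nsq (A *\<^sub>v x) \<le> (op_norm A)\<^sup>2 * nsq x"
proof (cases "nsq x = 0")
  case True
  hence "x = 0\<^sub>v n" using nsq_zero_imp[OF x] by simp
  hence "A *\<^sub>v x = 0\<^sub>v m" using A by (intro eq_vecI) (auto simp: scalar_prod_def)
  hence "nsq (A *\<^sub>v x) = 0" by (simp add: nsq_def)
  thus ?thesis using nsq_nonneg[of x] by simp
next
  case False
  hence pos: "0 < nsq x" using nsq_nonneg[of x] by linarith
  define c where "c = complex_of_real (1 / sqrt (nsq x))"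
  have cm: "cmod c = 1 / sqrt (nsq x)" unfolding c_def using pos by (simp add: norm_divide)
  have z: "c \<cdot>\<^sub>v x \<in> carrier_vec n" using x by simp
  have nz: "nsq (c \<cdot>\<^sub>v x) = 1" unfolding nsq_smult cm using pos by (simp add: power_divide)
  have "vec_norm (A *\<^sub>v (c \<cdot>\<^sub>v x)) \<le> op_norm A" by (rule op_norm_ge[OF A z]) (simp add: nz)
  moreover have "A *\<^sub>v (c \<cdot>\<^sub>v x) = c \<cdot>\<^sub>v (A *\<^sub>v x)" using A x by (simp add: mult_mat_vec)
  moreover have "nsq (c \<cdot>\<^sub>v (A *\<^sub>v x)) = nsq (A *\<^sub>v x) / nsq x"
    unfolding nsq_smult cm using pos by (simp add: power_divide)
  ultimately have "sqrt (nsq (A *\<^sub>v x) / nsq x) \<le> op_norm A"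
    unfolding vec_norm_nsq by simp
  hence "nsq (A *\<^sub>v x) / nsq x \<le> (op_norm A)\<^sup>2"
    by (metis nsq_nonneg pos divide_nonneg_pos real_le_rsqrt real_sqrt_le_iff sqrt_le_D)
  thus ?thesis using pos by (simp add: field_simps)
qed

lemma arcsin_lip:
  fixes a b h :: real
  assumes h: "0 < h" "h \<le> 1" and a: "\<bar>a\<bar> \<le> 1 - h" and b: "\<bar>b\<bar> \<le> 1 - h"
  shows "(arcsin a - arcsin b)\<^sup>2 \<le> (a - b)\<^sup>2 / h"
proof -
  have main: "(arcsin v - arcsin u)\<^sup>2 \<le> (v - u)\<^sup>2 / h"
    if uv: "u < v" "\<bar>u\<bar> \<le> 1 - h" "\<bar>v\<bar> \<le> 1 - h" for u v
  proof -
    have "\<exists>z. u < z \<and> z < v \<and> arcsin v - arcsin u = (v - u) * inverse (sqrt (1 - z\<^sup>2))"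
    proof (rule MVT2[OF uv(1)])
      fix x assume "u \<le> x" "x \<le> v"
      hence "-1 < x" "x < 1" using uv h by auto
      thus "DERIV arcsin x :> inverse (sqrt (1 - x\<^sup>2))" by (rule DERIV_arcsin)
    qed
    then obtain z where z: "u < z" "z < v" and eq: "arcsin v - arcsin u = (v - u) * inverse (sqrt (1 - z\<^sup>2))"
      by blast
    have za: "\<bar>z\<bar> \<le> 1 - h" using z uv by auto
    have "h \<le> 1 - z\<^sup>2"
    proof -
      have "z\<^sup>2 = \<bar>z\<bar> * \<bar>z\<bar>" by (simp add: power2_eq_square abs_mult_self_eq)
      also have "\<dots> \<le> (1 - h) * 1" using za h by (intro mult_mono) auto
      finally show ?thesis by simp
    qed
    hence pos: "0 < 1 - z\<^sup>2" using h by simp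
    have "(arcsin v - arcsin u)\<^sup>2 = (v - u)\<^sup>2 / (1 - z\<^sup>2)"
      unfolding eq using pos by (simp add: power_mult_distrib power_inverse divide_inverse)
    also have "\<dots> \<le> (v - u)\<^sup>2 / h"
      using pos h \<open>h \<le> 1 - z\<^sup>2\<close> by (intro divide_left_mono) auto
    finally show ?thesis .
  qed
  consider "a < b" | "a = b" | "b < a" by linarith
  thus ?thesis
  proof cases
    case 1
    from main[OF 1 a b] show ?thesis by (simp add: power2_commute)
  next
    case 3
    from main[OF 3 b a] show ?thesis .
  qed simp
qed

lemma ab_sq:
  fixes a b :: real assumes "0 \<le> a" "0 \<le> b" shows "a * b \<le> a\<^sup>2 + b\<^sup>2"
proof -
  have "0 \<le> (a - b)\<^sup>2" by simp
  hence "2 * a * b \<le> a\<^sup>2 + b\<^sup>2" by (simp add: power2_diff)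
  moreover have "0 \<le> a * b" using assms by simp
  ultimately show ?thesis by linarith
qed

lemma integrable_prod_r:
  fixes P :: "'a measure" and r :: "'a \<Rightarrow> complex vec"
  assumes ri: "(\<lambda>\<omega>. r \<omega> $ i) \<in> borel_measurable P" "integrable P (\<lambda>\<omega>. (cmod (r \<omega> $ i))\<^sup>2)"
   and rj: "(\<lambda>\<omega>. r \<omega> $ j) \<in> borel_measurable P" "integrable P (\<lambda>\<omega>. (cmod (r \<omega> $ j))\<^sup>2)"
  shows "integrable P (\<lambda>\<omega>. r \<omega> $ i * cnj (r \<omega> $ j))"
proof (rule Bochner_Integration.integrable_bound)
  show "integrable P (\<lambda>\<omega>. (cmod (r \<omega> $ i))\<^sup>2 + (cmod (r \<omega> $ j))\<^sup>2)" using ri rj by auto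
  have "(\<lambda>\<omega>. cnj (r \<omega> $ j)) \<in> borel_measurable P"
    by (rule borel_measurable_continuous_on[OF continuous_on_cnj[OF continuous_on_id] rj(1)])
  thus "(\<lambda>\<omega>. r \<omega> $ i * cnj (r \<omega> $ j)) \<in> borel_measurable P"
    using ri(1) by (intro borel_measurable_times) auto
  show "AE \<omega> in P. norm (r \<omega> $ i * cnj (r \<omega> $ j)) \<le> norm ((cmod (r \<omega> $ i))\<^sup>2 + (cmod (r \<omega> $ j))\<^sup>2)"
  proof (rule AE_I2)
    fix \<omega>
    have "norm (r \<omega> $ i * cnj (r \<omega> $ j)) = cmod (r \<omega> $ i) * cmod (r \<omega> $ j)"
      by (simp add: norm_mult)
    also have "\<dots> \<le> (cmod (r \<omega> $ i))\<^sup>2 + (cmod (r \<omega> $ j))\<^sup>2"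
      by (rule ab_sq) auto
    also have "\<dots> = norm ((cmod (r \<omega> $ i))\<^sup>2 + (cmod (r \<omega> $ j))\<^sup>2)" by simp
    finally show "norm (r \<omega> $ i * cnj (r \<omega> $ j)) \<le> norm ((cmod (r \<omega> $ i))\<^sup>2 + (cmod (r \<omega> $ j))\<^sup>2)" .
  qed
qed

lemma cmod_sq_Re: "(cmod z)\<^sup>2 = Re (z * cnj z)"
  using complex_norm_square[of z] by (metis Re_complex_of_real)

lemma expect_quad:
  fixes P :: "'a measure" and r :: "'a \<Rightarrow> complex vec" and D Cr :: "complex mat"
  assumes rc: "\<forall>\<omega>\<in>space P. r \<omega> \<in> carrier_vec n"
   and meas: "\<forall>i<n. (\<lambda>\<omega>. r \<omega> $ i) \<in> borel_measurable P \<and> integrable P (\<lambda>\<omega>. (cmod (r \<omega> $ i))\<^sup>2)"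
   and cov: "\<forall>i<n. \<forall>j<n. (LINT \<omega>|P. r \<omega> $ i * cnj (r \<omega> $ j)) = Cr $$ (i,j)"
   and D: "D \<in> carrier_mat n n"
  shows "integrable P (\<lambda>\<omega>. nsq (D *\<^sub>v r \<omega>)) \<and>
     (LINT \<omega>|P. nsq (D *\<^sub>v r \<omega>)) = (\<Sum>k<n. Re (qf Cr (vec n (\<lambda>j. cnj (D$$(k,j))))))"
proof -
  define f where "f k \<omega> = (\<Sum>i<n. \<Sum>j<n. (D$$(k,i) * cnj (D$$(k,j))) * (r \<omega> $ i * cnj (r \<omega> $ j)))"
    for k \<omega>
  have ip: "integrable P (\<lambda>\<omega>. r \<omega> $ i * cnj (r \<omega> $ j))" if "i < n" "j < n" for i j
    using meas that by (intro integrable_prod_r) auto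
  have fint: "integrable P (f k)" for k
    unfolding f_def
    apply (rule Bochner_Integration.integrable_sum)
    apply (rule Bochner_Integration.integrable_sum)
    apply (rule Bochner_Integration.integrable_mult_right)
    using ip by auto
  have fval: "(LINT \<omega>|P. f k \<omega>) = (\<Sum>i<n. \<Sum>j<n. (D$$(k,i) * cnj (D$$(k,j))) * Cr$$(i,j))" for k
  proof -
    have "(LINT \<omega>|P. f k \<omega>) = (\<Sum>i<n. LINT \<omega>|P. (\<Sum>j<n. (D$$(k,i) * cnj (D$$(k,j))) * (r \<omega> $ i * cnj (r \<omega> $ j))))"
      unfolding f_def
      apply (rule Bochner_Integration.integral_sum)
      apply (rule Bochner_Integration.integrable_sum)
      apply (rule Bochner_Integration.integrable_mult_right)
      using ip by auto
    also have "\<dots> = (\<Sum>i<n. \<Sum>j<n. LINT \<omega>|P. (D$$(k,i) * cnj (D$$(k,j))) * (r \<omega> $ i * cnj (r \<omega> $ j)))"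
      apply (intro sum.cong refl)
      apply (rule Bochner_Integration.integral_sum)
      apply (rule Bochner_Integration.integrable_mult_right)
      using ip by auto
    also have "\<dots> = (\<Sum>i<n. \<Sum>j<n. (D$$(k,i) * cnj (D$$(k,j))) * Cr$$(i,j))"
      using cov by (intro sum.cong refl) simp
    finally show ?thesis .
  qed
  have pw: "nsq (D *\<^sub>v r \<omega>) = (\<Sum>k<n. Re (f k \<omega>))" if w: "\<omega> \<in> space P" for \<omega>
  proof -
    have rw: "r \<omega> \<in> carrier_vec n" using rc w by auto
    have "nsq (D *\<^sub>v r \<omega>) = (\<Sum>k<n. (cmod ((D *\<^sub>v r \<omega>) $ k))\<^sup>2)"
      unfolding nsq_def using D by simp
    also have "\<dots> = (\<Sum>k<n. (cmod (\<Sum>i<n. D$$(k,i) * r \<omega> $ i))\<^sup>2)"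
      by (intro sum.cong refl, subst mv_entry[OF D rw]) auto
    also have "\<dots> = (\<Sum>k<n. Re (f k \<omega>))"
    proof (intro sum.cong refl)
      fix k
      have "(cmod (\<Sum>i<n. D$$(k,i) * r \<omega> $ i))\<^sup>2 =
          Re ((\<Sum>i<n. D$$(k,i) * r \<omega> $ i) * (\<Sum>j<n. cnj (D$$(k,j)) * cnj (r \<omega> $ j)))"
        unfolding cmod_sq_Re by simp
      also have "(\<Sum>i<n. D$$(k,i) * r \<omega> $ i) * (\<Sum>j<n. cnj (D$$(k,j)) * cnj (r \<omega> $ j)) = f k \<omega>"
        unfolding f_def sum_product by (intro sum.cong refl) (simp add: mult_ac)
      finally show "(cmod (\<Sum>i<n. D$$(k,i) * r \<omega> $ i))\<^sup>2 = Re (f k \<omega>)" .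
    qed
    finally show ?thesis .
  qed
  have int2: "integrable P (\<lambda>\<omega>. \<Sum>k<n. Re (f k \<omega>))"
    apply (rule Bochner_Integration.integrable_sum)
    apply (rule integrable_Re)
    using fint by auto
  have I1: "integrable P (\<lambda>\<omega>. nsq (D *\<^sub>v r \<omega>))"
    using int2 by (rule Bochner_Integration.integrable_cong[THEN iffD1, OF refl, rotated]) (simp add: pw)
  have "(LINT \<omega>|P. nsq (D *\<^sub>v r \<omega>)) = (LINT \<omega>|P. (\<Sum>k<n. Re (f k \<omega>)))"
    by (rule Bochner_Integration.integral_cong) (simp_all add: pw)
  also have "\<dots> = (\<Sum>k<n. Re (LINT \<omega>|P. f k \<omega>))"
    using fint by (subst Bochner_Integration.integral_sum) auto
  also have "\<dots> = (\<Sum>k<n. Re (qf Cr (vec n (\<lambda>j. cnj (D$$(k,j))))))"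
    unfolding fval qf_def by (intro sum.cong refl arg_cong[where f=Re]) (auto intro!: sum.cong simp: mult_ac)
  finally show ?thesis using I1 by simp
qed

lemma mm_entry:
  assumes "A \<in> carrier_mat m l" "B \<in> carrier_mat l n" "i < m" "j < n"
  shows "(A * B)$$(i,j) = (\<Sum>k<l. A$$(i,k) * B$$(k,j))"
  using assms by (auto simp: scalar_prod_def atLeast0LessThan intro!: sum.cong)

lemma sq_sum_le: fixes x y :: real shows "(x + y)\<^sup>2 \<le> 2 * x\<^sup>2 + 2 * y\<^sup>2"
proof -
  have "0 \<le> (x - y)\<^sup>2" by simp
  thus ?thesis unfolding power2_sum power2_diff by linarith
qed

lemma nsq_add2:
  assumes a: "a \<in> carrier_vec n" and b: "b \<in> carrier_vec n"
  shows "nsq (a + b) \<le> 2 * nsq a + 2 * nsq b"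
proof -
  have "nsq (a + b) = (\<Sum>i<n. (cmod (a$i + b$i))\<^sup>2)" unfolding nsq_def using a b by simp
  also have "\<dots> \<le> (\<Sum>i<n. 2 * (cmod (a$i))\<^sup>2 + 2 * (cmod (b$i))\<^sup>2)"
  proof (rule sum_mono)
    fix i
    have "cmod (a$i + b$i) \<le> cmod (a$i) + cmod (b$i)" by (rule norm_triangle_ineq)
    hence "(cmod (a$i + b$i))\<^sup>2 \<le> (cmod (a$i) + cmod (b$i))\<^sup>2" by (intro power_mono) auto
    also have "\<dots> \<le> 2 * (cmod (a$i))\<^sup>2 + 2 * (cmod (b$i))\<^sup>2" by (rule sq_sum_le)
    finally show "(cmod (a$i + b$i))\<^sup>2 \<le> 2 * (cmod (a$i))\<^sup>2 + 2 * (cmod (b$i))\<^sup>2" .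
  qed
  also have "\<dots> = 2 * nsq a + 2 * nsq b"
    unfolding nsq_def using a b by (simp add: sum.distrib sum_distrib_left)
  finally show ?thesis .
qed

lemma qf_minus_mat:
  assumes A: "A \<in> carrier_mat n n" and B: "B \<in> carrier_mat n n" and x: "x \<in> carrier_vec n"
  shows "qf (A - B) x = qf A x - qf B x"
  unfolding qf_def using A B x
  by (simp add: sum_subtractf[symmetric] algebra_simps)

lemma vk_bound:
  assumes Cr: "Cr \<in> carrier_mat n n" and Ch: "Ch \<in> carrier_mat n n" and th: "0 < \<theta>"
   and lb: "\<And>x. x \<in> carrier_vec n \<Longrightarrow> \<theta> * nsq x \<le> Re (qf Cr x)"
   and fsd: "fs (Cr - Ch) \<le> \<theta>\<^sup>2/4"
   and v: "v \<in> carrier_vec n"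
  shows "Re (qf Cr v) \<le> 4/\<theta> * nsq (Ch *\<^sub>v v)"
proof -
  define w where "w = Ch *\<^sub>v v"
  have w: "w \<in> carrier_vec n" unfolding w_def using Ch v by simp
  have D: "Cr - Ch \<in> carrier_mat n n" using Ch by (rule minus_carrier_mat)
  have split: "qf Cr v = qf Ch v + qf (Cr - Ch) v" using qf_minus_mat[OF Cr Ch v] by simp
  have sfs: "sqrt (fs (Cr - Ch)) \<le> \<theta>/2"
  proof -
    have "sqrt (fs (Cr - Ch)) \<le> sqrt ((\<theta>/2)\<^sup>2)" using fsd by (intro real_sqrt_le_mono) (simp add: power_divide)
    thus ?thesis using th by simp
  qed
  have dq: "cmod (qf (Cr - Ch) v) \<le> \<theta>/2 * nsq v"
    using qfb[OF D v] sfs by (meson mult_right_mono nsq_nonneg order_trans)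
  have l1: "\<theta>/2 * nsq v \<le> Re (qf Ch v)"
  proof -
    have "\<theta> * nsq v \<le> Re (qf Ch v) + Re (qf (Cr - Ch) v)" using lb[OF v] split by simp
    moreover have "Re (qf (Cr - Ch) v) \<le> \<theta>/2 * nsq v" using dq abs_Re_le_cmod[of "qf (Cr - Ch) v"] by linarith
    ultimately show ?thesis by simp
  qed
  have cs: "(cmod (qf Ch v))\<^sup>2 \<le> nsq v * nsq w"
    unfolding qf_alt[OF Ch v] w_def by (rule cs_vec[OF v]) (use Ch v in simp)
  have l2: "\<theta>\<^sup>2/4 * nsq v \<le> nsq w"
  proof (cases "nsq v = 0")
    case True thus ?thesis using nsq_nonneg[of w] by simp
  next
    case False
    hence pos: "0 < nsq v" using nsq_nonneg[of v] by linarith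
    have "(\<theta>/2 * nsq v)\<^sup>2 \<le> (Re (qf Ch v))\<^sup>2"
      using l1 th pos by (intro power_mono) auto
    also have "\<dots> \<le> (cmod (qf Ch v))\<^sup>2" using abs_Re_le_cmod[of "qf Ch v"]
      by (metis abs_ge_zero power2_abs power_mono)
    also have "\<dots> \<le> nsq v * nsq w" by (rule cs)
    finally have "nsq v * (\<theta>\<^sup>2/4 * nsq v) \<le> nsq v * nsq w"
      by (simp add: power_mult_distrib power_divide power2_eq_square mult_ac)
    thus ?thesis using pos by simp
  qed
  have l3: "cmod (qf Ch v) \<le> 2/\<theta> * nsq w"
  proof (rule power2_le_imp_le)
    have "nsq v \<le> 4/\<theta>\<^sup>2 * nsq w" using l2 th by (simp add: field_simps)
    hence "nsq v * nsq w \<le> (4/\<theta>\<^sup>2 * nsq w) * nsq w" by (intro mult_right_mono) auto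
    also have "\<dots> = (2/\<theta> * nsq w)\<^sup>2" by (simp add: power2_eq_square)
    finally show "(cmod (qf Ch v))\<^sup>2 \<le> (2/\<theta> * nsq w)\<^sup>2" using cs by linarith
    show "0 \<le> 2/\<theta> * nsq w" using th by simp
  qed
  have "Re (qf Cr v) \<le> cmod (qf Ch v) + \<theta>/2 * nsq v"
    using split abs_Re_le_cmod[of "qf Ch v"] abs_Re_le_cmod[of "qf (Cr - Ch) v"] dq by simp
  also have "\<dots> \<le> 2/\<theta> * nsq w + \<theta>/2 * (4/\<theta>\<^sup>2 * nsq w)"
    using l3 l2 th by (intro add_mono mult_left_mono) (auto simp: field_simps)
  also have "\<dots> = 4/\<theta> * nsq w" using th by (simp add: field_simps power2_eq_square)
  finally show ?thesis unfolding w_def .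
qed

lemma herm_mv_cnj:
  assumes Cr: "Cr \<in> carrier_mat n n" and X: "X \<in> carrier_mat n n"
   and hCr: "\<And>i j. i<n \<Longrightarrow> j<n \<Longrightarrow> Cr$$(j,i) = cnj (Cr$$(i,j))"
   and k: "k < n"
  shows "Cr *\<^sub>v vec n (\<lambda>j. cnj (X$$(k,j))) = vec n (\<lambda>j. cnj ((X * Cr)$$(k,j)))"
proof (rule eq_vecI)
  fix i assume "i < dim_vec (vec n (\<lambda>j. cnj ((X * Cr)$$(k,j))))"
  hence i: "i < n" by simp
  have "(Cr *\<^sub>v vec n (\<lambda>j. cnj (X$$(k,j))))$i = (\<Sum>j<n. Cr$$(i,j) * cnj (X$$(k,j)))"
    using mv_entry[OF Cr _ i, of "vec n (\<lambda>j. cnj (X$$(k,j)))"] by simp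
  also have "\<dots> = (\<Sum>j<n. cnj (X$$(k,j) * Cr$$(j,i)))"
    using i by (intro sum.cong refl) (simp add: hCr[symmetric] mult.commute)
  also have "\<dots> = cnj ((X * Cr)$$(k,i))" using mm_entry[OF X Cr k i] by simp
  finally show "(Cr *\<^sub>v vec n (\<lambda>j. cnj (X$$(k,j))))$i = vec n (\<lambda>j. cnj ((X * Cr)$$(k,j))) $ i"
    using i by simp
qed (use Cr in simp)

lemma vec_sub_sub:
  fixes a b c :: "complex vec"
  assumes "a \<in> carrier_vec n" "b \<in> carrier_vec n" "c \<in> carrier_vec n"
  shows "a - (b - c) = (a - b) + c"
  using assms by (intro eq_vecI) (auto simp: algebra_simps)

lemma sum_bound:
  fixes Cr Ch G Gh Y Yh :: "complex mat"
  assumes th: "0 < \<theta>" and Cr: "Cr \<in> carrier_mat n n" and Ch: "Ch \<in> carrier_mat n n"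
   and G: "G \<in> carrier_mat n n" and Gh: "Gh \<in> carrier_mat n n"
   and Y: "Y \<in> carrier_mat n n" and Yh: "Yh \<in> carrier_mat n n"
   and hCr: "\<And>i j. i<n \<Longrightarrow> j<n \<Longrightarrow> Cr$$(j,i) = cnj (Cr$$(i,j))"
   and hCh: "\<And>i j. i<n \<Longrightarrow> j<n \<Longrightarrow> Ch$$(j,i) = cnj (Ch$$(i,j))"
   and lb: "\<And>x. x \<in> carrier_vec n \<Longrightarrow> \<theta> * nsq x \<le> Re (qf Cr x)"
   and fsd: "fs (Cr - Ch) \<le> \<theta>\<^sup>2/4"
   and GCr: "G * Cr = 1\<^sub>m n" and GCh: "Gh * Ch = 1\<^sub>m n"
  shows "(\<Sum>k<n. Re (qf Cr (vec n (\<lambda>j. cnj ((Yh * Gh - Y * G)$$(k,j)))))) \<le>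
     8/\<theta> * (fs (Yh - Y) + (\<Sum>k<n. nsq ((Cr - Ch) *\<^sub>v vec n (\<lambda>j. cnj ((Y * G)$$(k,j))))))"
proof -
  define X where "X = Y * G"
  define Xh where "Xh = Yh * Gh"
  have X: "X \<in> carrier_mat n n" and Xh: "Xh \<in> carrier_mat n n"
    unfolding X_def Xh_def using Y G Yh Gh by auto
  have XCr: "X * Cr = Y" unfolding X_def using assoc_mult_mat[OF Y G Cr] GCr Y by simp
  have XCh: "Xh * Ch = Yh" unfolding Xh_def using assoc_mult_mat[OF Yh Gh Ch] GCh Yh by simp
  define z where "z k = vec n (\<lambda>j. cnj (X$$(k,j)))" for k
  define zh where "zh k = vec n (\<lambda>j. cnj (Xh$$(k,j)))" for k
  define b where "b k = vec n (\<lambda>j. cnj (Y$$(k,j)))" for k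
  define bh where "bh k = vec n (\<lambda>j. cnj (Yh$$(k,j)))" for k
  have zc[simp]: "z k \<in> carrier_vec n" "zh k \<in> carrier_vec n" "b k \<in> carrier_vec n" "bh k \<in> carrier_vec n"
    for k unfolding z_def zh_def b_def bh_def by auto
  have DD: "Cr - Ch \<in> carrier_mat n n" using Ch by (rule minus_carrier_mat)
  have per_k: "Re (qf Cr (vec n (\<lambda>j. cnj ((Xh - X)$$(k,j))))) \<le>
      8/\<theta> * (nsq (bh k - b k) + nsq ((Cr - Ch) *\<^sub>v z k))" if k: "k < n" for k
  proof -
    have v: "vec n (\<lambda>j. cnj ((Xh - X)$$(k,j))) = zh k - z k"
      unfolding z_def zh_def using X Xh k by (intro eq_vecI) auto
    have Crz: "Cr *\<^sub>v z k = b k" unfolding z_def b_def using herm_mv_cnj[OF Cr X hCr k] XCr by simp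
    have Chz: "Ch *\<^sub>v zh k = bh k" unfolding zh_def bh_def using herm_mv_cnj[OF Ch Xh hCh k] XCh by simp
    have "Ch *\<^sub>v (zh k - z k) = bh k - Ch *\<^sub>v z k"
      using mult_minus_distrib_mat_vec[OF Ch zc(2) zc(1)] Chz by simp
    also have "Ch *\<^sub>v z k = b k - (Cr - Ch) *\<^sub>v z k"
    proof -
      have "(Cr - Ch) *\<^sub>v z k = b k - Ch *\<^sub>v z k"
        using minus_mult_distrib_mat_vec[OF Cr Ch zc(1)] Crz by simp
      thus ?thesis using Ch by (intro eq_vecI) auto
    qed
    also have "bh k - (b k - (Cr - Ch) *\<^sub>v z k) = (bh k - b k) + (Cr - Ch) *\<^sub>v z k"
      by (rule vec_sub_sub[of _ n]) (use DD in auto)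
    finally have w: "Ch *\<^sub>v (zh k - z k) = (bh k - b k) + (Cr - Ch) *\<^sub>v z k" .
    have A: "Re (qf Cr (zh k - z k)) \<le> 4/\<theta> * nsq (Ch *\<^sub>v (zh k - z k))"
      by (rule vk_bound[OF Cr Ch th lb fsd]) auto
    have B: "nsq (Ch *\<^sub>v (zh k - z k)) \<le> 2 * nsq (bh k - b k) + 2 * nsq ((Cr - Ch) *\<^sub>v z k)"
      unfolding w by (rule nsq_add2[of _ n]) (use DD in auto)
    have "4/\<theta> * nsq (Ch *\<^sub>v (zh k - z k)) \<le> 4/\<theta> * (2 * nsq (bh k - b k) + 2 * nsq ((Cr - Ch) *\<^sub>v z k))"
      using th B by (intro mult_left_mono) auto
    with A have "Re (qf Cr (zh k - z k)) \<le> 4/\<theta> * (2 * nsq (bh k - b k) + 2 * nsq ((Cr - Ch) *\<^sub>v z k))"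
      by linarith
    thus ?thesis unfolding v by (simp add: algebra_simps)
  qed
  have fsY: "(\<Sum>k<n. nsq (bh k - b k)) = fs (Yh - Y)"
    unfolding fs_def nsq_def bh_def b_def using Y Yh
    by (intro sum.cong refl) (auto simp: complex_cnj_diff[symmetric] simp del: complex_cnj_diff)
  have "(\<Sum>k<n. Re (qf Cr (vec n (\<lambda>j. cnj ((Xh - X)$$(k,j)))))) \<le>
     (\<Sum>k<n. 8/\<theta> * (nsq (bh k - b k) + nsq ((Cr - Ch) *\<^sub>v z k)))"
    by (intro sum_mono per_k) auto
  also have "\<dots> = 8/\<theta> * (fs (Yh - Y) + (\<Sum>k<n. nsq ((Cr - Ch) *\<^sub>v z k)))"
    unfolding fsY[symmetric] sum.distrib[symmetric] by (rule sum_distrib_left[symmetric])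
  finally show ?thesis unfolding X_def Xh_def z_def .
qed

lemma swap_bound:
  assumes Dl: "Dl \<in> carrier_mat n n" and X: "X \<in> carrier_mat n n"
   and opb: "\<And>u. u \<in> carrier_vec n \<Longrightarrow> nsq (X *\<^sub>v u) \<le> K * nsq u"
  shows "(\<Sum>k<n. nsq (Dl *\<^sub>v vec n (\<lambda>j. cnj (X$$(k,j))))) \<le> K * fs Dl"
proof -
  define d where "d i = vec n (\<lambda>j. cnj (Dl$$(i,j)))" for i
  have dc: "d i \<in> carrier_vec n" for i unfolding d_def by simp
  have "(\<Sum>k<n. nsq (Dl *\<^sub>v vec n (\<lambda>j. cnj (X$$(k,j))))) =
      (\<Sum>k<n. \<Sum>i<n. (cmod (\<Sum>j<n. Dl$$(i,j) * cnj (X$$(k,j))))\<^sup>2)"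
  proof (intro sum.cong refl)
    fix k
    have "nsq (Dl *\<^sub>v vec n (\<lambda>j. cnj (X$$(k,j)))) = (\<Sum>i<n. (cmod ((Dl *\<^sub>v vec n (\<lambda>j. cnj (X$$(k,j))))$i))\<^sup>2)"
      unfolding nsq_def using Dl by simp
    also have "\<dots> = (\<Sum>i<n. (cmod (\<Sum>j<n. Dl$$(i,j) * cnj (X$$(k,j))))\<^sup>2)"
      by (intro sum.cong refl, subst mv_entry[OF Dl, of "vec n (\<lambda>j. cnj (X$$(k,j)))"]) auto
    finally show "nsq (Dl *\<^sub>v vec n (\<lambda>j. cnj (X$$(k,j)))) = (\<Sum>i<n. (cmod (\<Sum>j<n. Dl$$(i,j) * cnj (X$$(k,j))))\<^sup>2)" .
  qed
  also have "\<dots> = (\<Sum>i<n. \<Sum>k<n. (cmod (\<Sum>j<n. Dl$$(i,j) * cnj (X$$(k,j))))\<^sup>2)"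
    by (rule sum.swap)
  also have "\<dots> = (\<Sum>i<n. nsq (X *\<^sub>v d i))"
  proof (intro sum.cong refl)
    fix i
    have "nsq (X *\<^sub>v d i) = (\<Sum>k<n. (cmod ((X *\<^sub>v d i)$k))\<^sup>2)" unfolding nsq_def using X by simp
    also have "\<dots> = (\<Sum>k<n. (cmod (\<Sum>j<n. X$$(k,j) * cnj (Dl$$(i,j))))\<^sup>2)"
      by (intro sum.cong refl, subst mv_entry[OF X dc]) (auto simp: d_def)
    also have "\<dots> = (\<Sum>k<n. (cmod (\<Sum>j<n. Dl$$(i,j) * cnj (X$$(k,j))))\<^sup>2)"
    proof (intro sum.cong refl)
      fix k
      have e: "cnj (\<Sum>j<n. Dl$$(i,j) * cnj (X$$(k,j))) = (\<Sum>j<n. X$$(k,j) * cnj (Dl$$(i,j)))"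
        by (simp add: mult.commute)
      show "(cmod (\<Sum>j<n. X$$(k,j) * cnj (Dl$$(i,j))))\<^sup>2 = (cmod (\<Sum>j<n. Dl$$(i,j) * cnj (X$$(k,j))))\<^sup>2"
        by (simp only: e[symmetric] complex_mod_cnj)
    qed
    finally show "(\<Sum>k<n. (cmod (\<Sum>j<n. Dl$$(i,j) * cnj (X$$(k,j))))\<^sup>2) = nsq (X *\<^sub>v d i)" by simp
  qed
  also have "\<dots> \<le> (\<Sum>i<n. K * nsq (d i))" by (intro sum_mono opb dc)
  also have "\<dots> = K * fs Dl"
    unfolding fs_def nsq_def d_def using Dl by (simp add: sum_distrib_left)
  finally show ?thesis .
qed

lemma inv_bound:
  assumes Cr: "Cr \<in> carrier_mat n n" and G: "G \<in> carrier_mat n n" and CG: "Cr * G = 1\<^sub>m n"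
   and th: "0 < \<theta>"
   and lb: "\<And>x. x \<in> carrier_vec n \<Longrightarrow> \<theta> * nsq x \<le> Re (qf Cr x)"
   and u: "u \<in> carrier_vec n"
  shows "nsq (G *\<^sub>v u) \<le> 1/\<theta>\<^sup>2 * nsq u"
proof -
  define x where "x = G *\<^sub>v u"
  have x: "x \<in> carrier_vec n" unfolding x_def using G u by simp
  have Cx: "Cr *\<^sub>v x = u" unfolding x_def
    using assoc_mult_mat_vec[OF Cr G u, symmetric] CG u by simp
  have cs: "(cmod (qf Cr x))\<^sup>2 \<le> nsq x * nsq u"
    unfolding qf_alt[OF Cr x] Cx[symmetric] by (rule cs_vec[OF x]) (use Cr x in simp)
  have "\<theta>\<^sup>2 * nsq x \<le> nsq u"
  proof (cases "nsq x = 0")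
    case True thus ?thesis by simp
  next
    case False
    hence pos: "0 < nsq x" using nsq_nonneg[of x] by linarith
    have "(\<theta> * nsq x)\<^sup>2 \<le> (Re (qf Cr x))\<^sup>2"
      using lb[OF x] th pos by (intro power_mono) auto
    also have "\<dots> \<le> (cmod (qf Cr x))\<^sup>2" using abs_Re_le_cmod[of "qf Cr x"]
      by (metis abs_ge_zero power2_abs power_mono)
    also have "\<dots> \<le> nsq x * nsq u" by (rule cs)
    finally have "nsq x * (\<theta>\<^sup>2 * nsq x) \<le> nsq x * nsq u"
      by (simp add: power_mult_distrib power2_eq_square mult_ac)
    thus ?thesis using pos by simp
  qed
  thus ?thesis unfolding x_def using th by (simp add: field_simps)
qed

lemma diag_bound:
  assumes Dg: "Dg \<in> carrier_mat n n"
   and off: "\<And>i j. i < n \<Longrightarrow> j < n \<Longrightarrow> i \<noteq> j \<Longrightarrow> Dg$$(i,j) = 0"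
   and dg: "\<And>i. i < n \<Longrightarrow> (cmod (Dg$$(i,i)))\<^sup>2 \<le> L"
   and w: "w \<in> carrier_vec n"
  shows "nsq (Dg *\<^sub>v w) \<le> L * nsq w"
proof -
  have "nsq (Dg *\<^sub>v w) = (\<Sum>i<n. (cmod ((Dg *\<^sub>v w)$i))\<^sup>2)" unfolding nsq_def using Dg by simp
  also have "\<dots> = (\<Sum>i<n. (cmod (Dg$$(i,i) * w$i))\<^sup>2)"
  proof (intro sum.cong refl)
    fix i assume i: "i \<in> {..<n}"
    have "(Dg *\<^sub>v w)$i = (\<Sum>j<n. Dg$$(i,j) * w$j)" using mv_entry[OF Dg w] i by simp
    also have "\<dots> = (\<Sum>j<n. if j = i then Dg$$(i,i) * w$i else 0)"
      using i off by (intro sum.cong refl) auto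
    also have "\<dots> = Dg$$(i,i) * w$i" using i by (simp add: sum.delta')
    finally show "(cmod ((Dg *\<^sub>v w)$i))\<^sup>2 = (cmod (Dg$$(i,i) * w$i))\<^sup>2" by simp
  qed
  also have "\<dots> \<le> (\<Sum>i<n. L * (cmod (w$i))\<^sup>2)"
    using dg by (intro sum_mono) (auto simp: norm_mult power_mult_distrib intro!: mult_right_mono)
  also have "\<dots> = L * nsq w" unfolding nsq_def using w by (simp add: sum_distrib_left)
  finally show ?thesis .
qed

lemma mat_adjoint_carrier:
  assumes "A \<in> carrier_mat m n"
  shows "mat_adjoint A \<in> carrier_mat n m"
  using assms unfolding mat_adjoint_def by auto

lemma mat_adjoint_entry:
  assumes A: "A \<in> carrier_mat m n" and i: "i < n" and j: "j < m"
  shows "mat_adjoint A $$ (i,j) = cnj (A $$ (j,i))"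
  using assms unfolding mat_adjoint_def by (simp add: mat_of_rows_index)

lemma inv_sqrt_diff:
  fixes p q :: real
  assumes p: "0 < p" and q: "0 < q"
  shows "\<bar>1 / sqrt q - 1 / sqrt p\<bar> \<le> \<bar>p - q\<bar> / (p * sqrt q)"
proof -
  have sp: "0 < sqrt p" and sq: "0 < sqrt q" using p q by auto
  have e1: "1 / sqrt q - 1 / sqrt p = (sqrt p - sqrt q) / (sqrt p * sqrt q)"
    using sp sq by (simp add: field_simps)
  have e2: "(sqrt p - sqrt q) * (sqrt p + sqrt q) = p - q"
    using p q by (simp add: algebra_simps power2_eq_square[symmetric])
  have "\<bar>sqrt p - sqrt q\<bar> * sqrt p \<le> \<bar>sqrt p - sqrt q\<bar> * (sqrt p + sqrt q)"
    using sq by (intro mult_left_mono) auto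
  also have "\<dots> = \<bar>p - q\<bar>" using e2 sp sq by (metis abs_mult abs_of_pos add_pos_pos)
  finally have b: "\<bar>sqrt p - sqrt q\<bar> \<le> \<bar>p - q\<bar> / sqrt p" using sp by (simp add: field_simps)
  have "\<bar>1 / sqrt q - 1 / sqrt p\<bar> = \<bar>sqrt p - sqrt q\<bar> / (sqrt p * sqrt q)"
    unfolding e1 using sp sq by (simp add: abs_divide abs_mult)
  also have "\<dots> \<le> (\<bar>p - q\<bar> / sqrt p) / (sqrt p * sqrt q)"
    using b sp sq by (intro divide_right_mono) auto
  also have "\<dots> = \<bar>p - q\<bar> / (p * sqrt q)" using sp sq p
    by (simp add: field_simps power2_eq_square[symmetric])
  finally show ?thesis .
qed

lemma pair_bound:
  fixes di dj hi hj e \<theta> :: real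
  assumes th: "0 < \<theta>" and di: "\<theta> \<le> di" and dj: "\<theta> \<le> dj"
    and hi: "\<bar>hi - di\<bar> \<le> e" and hj: "\<bar>hj - dj\<bar> \<le> e" and e: "e \<le> \<theta>/2"
  shows "\<bar>1 / (sqrt hi * sqrt hj) - 1 / (sqrt di * sqrt dj)\<bar> \<le> 6 * e / \<theta>\<^sup>2"
    and "0 < 1 / (sqrt hi * sqrt hj)" "1 / (sqrt hi * sqrt hj) \<le> 2 / \<theta>"
proof -
  have hi2: "\<theta>/2 \<le> hi" and hj2: "\<theta>/2 \<le> hj" using hi hj e di dj by auto
  define p where "p = di * dj"
  define q where "q = hi * hj"
  have p: "0 < p" unfolding p_def using th di dj by simp
  have q2: "(\<theta>/2)\<^sup>2 \<le> q" unfolding q_def power2_eq_square using hi2 hj2 th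
    by (intro mult_mono) auto
  have "0 < (\<theta>/2)\<^sup>2" using th by simp
  hence q: "0 < q" using q2 by linarith
  have sq: "\<theta>/2 \<le> sqrt q" using q2 th by (metis real_le_rsqrt)
  have ss: "sqrt hi * sqrt hj = sqrt q" "sqrt di * sqrt dj = sqrt p"
    unfolding p_def q_def by (simp_all add: real_sqrt_mult)
  have hile: "hi \<le> 2 * di" using hi e di th by linarith
  have "\<bar>p - q\<bar> \<le> e * dj + hi * e"
  proof -
    have eq: "p - q = (di - hi) * dj + hi * (dj - hj)" unfolding p_def q_def by (simp add: algebra_simps)
    have "\<bar>p - q\<bar> \<le> \<bar>(di - hi) * dj\<bar> + \<bar>hi * (dj - hj)\<bar>"
      unfolding eq by (rule abs_triangle_ineq)
    also have "\<bar>(di - hi) * dj\<bar> = \<bar>di - hi\<bar> * dj" using th dj by (simp add: abs_mult)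
    also have "\<bar>hi * (dj - hj)\<bar> = hi * \<bar>dj - hj\<bar>" using th hi2 by (simp add: abs_mult)
    finally have "\<bar>p - q\<bar> \<le> \<bar>di - hi\<bar> * dj + hi * \<bar>dj - hj\<bar>" .
    also have "\<dots> \<le> e * dj + hi * e"
    proof (intro add_mono)
      show "\<bar>di - hi\<bar> * dj \<le> e * dj" using hi th dj by (intro mult_right_mono) (auto simp: abs_minus_commute)
      show "hi * \<bar>dj - hj\<bar> \<le> hi * e" using hj th hi2 by (intro mult_left_mono) (auto simp: abs_minus_commute)
    qed
    finally show ?thesis .
  qed
  also have "\<dots> \<le> e * dj + 2 * di * e" using hile e hi th by (intro add_left_mono mult_right_mono) auto
  finally have pq: "\<bar>p - q\<bar> \<le> e * dj + 2 * di * e" .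
  have "\<bar>p - q\<bar> / p \<le> e / di + 2 * e / dj"
    using pq p di dj th unfolding p_def by (simp add: field_simps)
  also have "\<dots> \<le> e / \<theta> + 2 * e / \<theta>"
  proof -
    have e0: "0 \<le> e" using hi by simp
    show ?thesis using e0 di dj th by (intro add_mono divide_left_mono) auto
  qed
  finally have pq2: "\<bar>p - q\<bar> / p \<le> 3 * e / \<theta>" by simp
  have "\<bar>1 / sqrt q - 1 / sqrt p\<bar> \<le> \<bar>p - q\<bar> / (p * sqrt q)" by (rule inv_sqrt_diff[OF p q])
  also have "\<dots> = (\<bar>p - q\<bar> / p) / sqrt q" by simp
  also have "\<dots> \<le> (3 * e / \<theta>) / (\<theta>/2)"
  proof (rule frac_le)
    show "0 \<le> 3 * e / \<theta>" using hi th by simp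
  qed (use pq2 sq th in auto)
  also have "\<dots> = 6 * e / \<theta>\<^sup>2" by (simp add: power2_eq_square)
  finally show "\<bar>1 / (sqrt hi * sqrt hj) - 1 / (sqrt di * sqrt dj)\<bar> \<le> 6 * e / \<theta>\<^sup>2" unfolding ss .
  show "0 < 1 / (sqrt hi * sqrt hj)" unfolding ss using q by simp
  show "1 / (sqrt hi * sqrt hj) \<le> 2 / \<theta>" unfolding ss using sq th
    using real_sqrt_gt_zero[OF q] by (simp add: field_simps)
qed

lemma single_bound:
  fixes d h e \<theta> :: real
  assumes th: "0 < \<theta>" "\<theta> \<le> 1" and d: "\<theta> \<le> d" and h: "\<bar>h - d\<bar> \<le> e" and e: "e \<le> \<theta>/2"
  shows "\<bar>1 / sqrt h - 1 / sqrt d\<bar> \<le> 2 * e / \<theta>\<^sup>2"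
proof -
  have h2: "\<theta>/2 \<le> h" using h e d by auto
  have hp: "0 < h" using h2 th by simp
  have dp: "0 < d" using d th by simp
  have sq: "\<theta>/2 \<le> sqrt h"
  proof -
    have "\<theta>/2 \<le> sqrt (\<theta>/2)" using th by (intro real_le_rsqrt) (auto simp: power2_eq_square)
    also have "\<dots> \<le> sqrt h" using h2 by simp
    finally show ?thesis .
  qed
  have "\<bar>1 / sqrt h - 1 / sqrt d\<bar> \<le> \<bar>d - h\<bar> / (d * sqrt h)" by (rule inv_sqrt_diff[OF dp hp])
  also have "\<dots> \<le> e / (\<theta> * (\<theta>/2))"
    using h d th sq dp by (intro frac_le mult_mono) (auto simp: abs_minus_commute)
  also have "\<dots> = 2 * e / \<theta>\<^sup>2" by (simp add: power2_eq_square)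
  finally show ?thesis .
qed

lemma ratio_bound:
  fixes x xh a ah e \<theta> :: real
  assumes th: "0 < \<theta>" and ah: "\<bar>ah\<bar> \<le> 2/\<theta>" and aa: "\<bar>ah - a\<bar> \<le> 6 * e / \<theta>\<^sup>2"
  shows "\<bar>xh * ah - x * a\<bar> \<le> \<bar>xh - x\<bar> * (2/\<theta>) + \<bar>x\<bar> * (6 * e / \<theta>\<^sup>2)"
    and "(xh * ah - x * a)\<^sup>2 \<le> 8 * (xh - x)\<^sup>2 / \<theta>\<^sup>2 + 72 * e\<^sup>2 * x\<^sup>2 / \<theta>^4"
proof -
  have eq: "xh * ah - x * a = (xh - x) * ah + x * (ah - a)" by (simp add: algebra_simps)
  have b1: "\<bar>(xh - x) * ah\<bar> \<le> \<bar>xh - x\<bar> * (2/\<theta>)" unfolding abs_mult using ah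
    by (intro mult_left_mono) auto
  have b2: "\<bar>x * (ah - a)\<bar> \<le> \<bar>x\<bar> * (6 * e / \<theta>\<^sup>2)" unfolding abs_mult using aa
    by (intro mult_left_mono) auto
  show "\<bar>xh * ah - x * a\<bar> \<le> \<bar>xh - x\<bar> * (2/\<theta>) + \<bar>x\<bar> * (6 * e / \<theta>\<^sup>2)"
    unfolding eq using b1 b2 abs_triangle_ineq by (smt (verit))
  have "(xh * ah - x * a)\<^sup>2 \<le> 2 * ((xh - x) * ah)\<^sup>2 + 2 * (x * (ah - a))\<^sup>2"
    unfolding eq by (rule sq_sum_le)
  also have "((xh - x) * ah)\<^sup>2 \<le> (\<bar>xh - x\<bar> * (2/\<theta>))\<^sup>2"
    using b1 by (metis abs_ge_zero power2_abs power_mono)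
  also have "(x * (ah - a))\<^sup>2 \<le> (\<bar>x\<bar> * (6 * e / \<theta>\<^sup>2))\<^sup>2"
    using b2 by (metis abs_ge_zero power2_abs power_mono)
  finally show "(xh * ah - x * a)\<^sup>2 \<le> 8 * (xh - x)\<^sup>2 / \<theta>\<^sup>2 + 72 * e\<^sup>2 * x\<^sup>2 / \<theta>^4"
    by (simp add: power_mult_distrib power_divide field_simps)
qed

lemma cr_entry_diff:
  fixes a1 a2 b1 b2 :: real
  shows "(cmod (complex_of_real (2/pi) * (of_real a1 + \<i> * of_real b1)
      - complex_of_real (2/pi) * (of_real a2 + \<i> * of_real b2)))\<^sup>2 \<le> (a1 - a2)\<^sup>2 + (b1 - b2)\<^sup>2"
proof -
  have eqz: "complex_of_real (2/pi) * (of_real a1 + \<i> * of_real b1)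
      - complex_of_real (2/pi) * (of_real a2 + \<i> * of_real b2) = Complex (2/pi * (a1 - a2)) (2/pi * (b1 - b2))"
    by (simp add: complex_eq_iff field_simps)
  have "(cmod (complex_of_real (2/pi) * (of_real a1 + \<i> * of_real b1)
      - complex_of_real (2/pi) * (of_real a2 + \<i> * of_real b2)))\<^sup>2 = (2/pi * (a1 - a2))\<^sup>2 + (2/pi * (b1 - b2))\<^sup>2"
    unfolding eqz cmod_power2 by simp
  also have "\<dots> = (2/pi)\<^sup>2 * ((a1 - a2)\<^sup>2 + (b1 - b2)\<^sup>2)"
    by (simp only: power_mult_distrib distrib_left)
  also have "\<dots> \<le> 1 * ((a1 - a2)\<^sup>2 + (b1 - b2)\<^sup>2)"
  proof (intro mult_right_mono)
    have "2/pi \<le> 1" using pi_gt3 by simp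
    moreover have "0 \<le> 2/pi" by simp
    ultimately show "(2/pi)\<^sup>2 \<le> 1" by (simp add: power_le_one)
  qed simp
  finally show ?thesis by simp
qed

lemma asin_half:
  fixes a b \<theta> :: real
  assumes th: "0 < \<theta>" "\<theta> < 1" and a: "\<bar>a\<bar> \<le> 1 - \<theta>/2" and b: "\<bar>b\<bar> \<le> 1 - \<theta>/2"
  shows "(arcsin a - arcsin b)\<^sup>2 \<le> 2/\<theta> * (a - b)\<^sup>2"
  using arcsin_lip[of "\<theta>/2" a b] th a b by (simp add: field_simps)

lemma diag_inv_sqrt_carrier: "B \<in> carrier_mat n n \<Longrightarrow> diag_inv_sqrt B \<in> carrier_mat n n"
  unfolding diag_inv_sqrt_def by auto

lemma diag_inv_sqrt_entry:
  "B \<in> carrier_mat n n \<Longrightarrow> i < n \<Longrightarrow> j < n \<Longrightarrow>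
   diag_inv_sqrt B $$ (i,j) = (if i = j then complex_of_real (1 / sqrt (Re (B$$(i,i)))) else 0)"
  unfolding diag_inv_sqrt_def by auto

lemma P_arcsine_carrier: "B \<in> carrier_mat n n \<Longrightarrow> P_arcsine B \<in> carrier_mat n n"
  unfolding P_arcsine_def by auto

lemma P_arcsine_entry:
  "B \<in> carrier_mat n n \<Longrightarrow> i < n \<Longrightarrow> j < n \<Longrightarrow>
   P_arcsine B $$ (i,j) = complex_of_real (2 / pi) *
       (complex_of_real (arcsin (Re (B $$ (i,j)) / (sqrt (Re (B $$ (i,i))) * sqrt (Re (B $$ (j,j)))))) +
        \<i> * complex_of_real (arcsin (Im (B $$ (i,j)) / (sqrt (Re (B $$ (i,i))) * sqrt (Re (B $$ (j,j)))))))"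
  unfolding P_arcsine_def by auto

lemma dmd_entry:
  assumes B: "B \<in> carrier_mat n n" and i: "i < n" and j: "j < n"
  shows "(diag_inv_sqrt B * B * diag_inv_sqrt B) $$ (i,j) =
    complex_of_real (1 / sqrt (Re (B$$(i,i)))) * B$$(i,j) * complex_of_real (1 / sqrt (Re (B$$(j,j))))"
proof -
  have Dg: "diag_inv_sqrt B \<in> carrier_mat n n" by (rule diag_inv_sqrt_carrier[OF B])
  have DB: "diag_inv_sqrt B * B \<in> carrier_mat n n" using Dg B by simp
  have e1: "(diag_inv_sqrt B * B) $$ (i,l) = complex_of_real (1 / sqrt (Re (B$$(i,i)))) * B$$(i,l)"
    if l: "l < n" for l
  proof -
    have "(diag_inv_sqrt B * B) $$ (i,l) = (\<Sum>k<n. diag_inv_sqrt B $$ (i,k) * B$$(k,l))"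
      by (rule mm_entry[OF Dg B i l])
    also have "\<dots> = (\<Sum>k<n. if k = i then complex_of_real (1 / sqrt (Re (B$$(i,i)))) * B$$(i,l) else 0)"
      using i by (intro sum.cong refl) (auto simp: diag_inv_sqrt_entry[OF B])
    also have "\<dots> = complex_of_real (1 / sqrt (Re (B$$(i,i)))) * B$$(i,l)" using i by (simp add: sum.delta')
    finally show ?thesis .
  qed
  have "(diag_inv_sqrt B * B * diag_inv_sqrt B) $$ (i,j) = (\<Sum>l<n. (diag_inv_sqrt B * B) $$ (i,l) * diag_inv_sqrt B $$ (l,j))"
    by (rule mm_entry[OF DB Dg i j])
  also have "\<dots> = (\<Sum>l<n. if l = j then (diag_inv_sqrt B * B) $$ (i,j) * complex_of_real (1 / sqrt (Re (B$$(j,j)))) else 0)"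
    using j by (intro sum.cong refl) (auto simp: diag_inv_sqrt_entry[OF B])
  also have "\<dots> = (diag_inv_sqrt B * B) $$ (i,j) * complex_of_real (1 / sqrt (Re (B$$(j,j))))"
    using j by (simp add: sum.delta')
  finally show ?thesis using e1[OF j] by simp
qed

lemma adjA_carrier:
  "B \<in> carrier_mat n n \<Longrightarrow> mat_adjoint (complex_of_real s \<cdot>\<^sub>m diag_inv_sqrt B) \<in> carrier_mat n n"
  by (intro mat_adjoint_carrier) (auto dest: diag_inv_sqrt_carrier)

lemma adjA_entry:
  assumes B: "B \<in> carrier_mat n n" and i: "i < n" and j: "j < n"
  shows "mat_adjoint (complex_of_real s \<cdot>\<^sub>m diag_inv_sqrt B) $$ (i,j) =
    (if i = j then complex_of_real (s / sqrt (Re (B$$(i,i)))) else 0)"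
proof -
  have C: "complex_of_real s \<cdot>\<^sub>m diag_inv_sqrt B \<in> carrier_mat n n" using diag_inv_sqrt_carrier[OF B] by simp
  show ?thesis
    unfolding mat_adjoint_entry[OF C i j] using i j diag_inv_sqrt_carrier[OF B]
    by (auto simp: diag_inv_sqrt_entry[OF B])
qed

lemma mult_adjA_entry:
  assumes B: "B \<in> carrier_mat n n" and Ch: "Ch \<in> carrier_mat n n" and k: "k < n" and j: "j < n"
  shows "(Ch * mat_adjoint (complex_of_real s \<cdot>\<^sub>m diag_inv_sqrt B)) $$ (k,j) =
    Ch$$(k,j) * complex_of_real (s / sqrt (Re (B$$(j,j))))"
proof -
  have "(Ch * mat_adjoint (complex_of_real s \<cdot>\<^sub>m diag_inv_sqrt B)) $$ (k,j) =
      (\<Sum>l<n. Ch$$(k,l) * mat_adjoint (complex_of_real s \<cdot>\<^sub>m diag_inv_sqrt B) $$ (l,j))"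
    by (rule mm_entry[OF Ch adjA_carrier[OF B] k j])
  also have "\<dots> = (\<Sum>l<n. if l = j then Ch$$(k,j) * complex_of_real (s / sqrt (Re (B$$(j,j)))) else 0)"
    using j by (intro sum.cong refl) (auto simp: adjA_entry[OF B])
  also have "\<dots> = Ch$$(k,j) * complex_of_real (s / sqrt (Re (B$$(j,j))))" using j by (simp add: sum.delta')
  finally show ?thesis .
qed

lemma P_arcsine_herm:
  assumes B: "B \<in> carrier_mat n n"
    and hB: "\<And>i j. i < n \<Longrightarrow> j < n \<Longrightarrow> B$$(j,i) = cnj (B$$(i,j))"
    and bI: "\<And>i j. i < n \<Longrightarrow> j < n \<Longrightarrow>
        \<bar>Im (B $$ (i,j)) / (sqrt (Re (B $$ (i,i))) * sqrt (Re (B $$ (j,j))))\<bar> \<le> 1"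
    and i: "i < n" and j: "j < n"
  shows "P_arcsine B $$ (j,i) = cnj (P_arcsine B $$ (i,j))"
proof -
  have re: "Re (B$$(j,i)) = Re (B$$(i,j))" and im: "Im (B$$(j,i)) = - Im (B$$(i,j))"
    using hB[OF i j] by simp_all
  have "arcsin (Im (B $$ (j,i)) / (sqrt (Re (B $$ (j,j))) * sqrt (Re (B $$ (i,i)))))
      = - arcsin (Im (B $$ (i,j)) / (sqrt (Re (B $$ (i,i))) * sqrt (Re (B $$ (j,j)))))"
  proof -
    have "Im (B $$ (j,i)) / (sqrt (Re (B $$ (j,j))) * sqrt (Re (B $$ (i,i))))
        = - (Im (B $$ (i,j)) / (sqrt (Re (B $$ (i,i))) * sqrt (Re (B $$ (j,j)))))"
      unfolding im by (simp add: mult.commute)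
    moreover have "arcsin (- (Im (B $$ (i,j)) / (sqrt (Re (B $$ (i,i))) * sqrt (Re (B $$ (j,j))))))
        = - arcsin (Im (B $$ (i,j)) / (sqrt (Re (B $$ (i,i))) * sqrt (Re (B $$ (j,j)))))"
      using bI[OF i j] by (intro arcsin_minus) (simp_all only: abs_le_iff, linarith+)
    ultimately show ?thesis by simp
  qed
  thus ?thesis unfolding P_arcsine_entry[OF B i j] P_arcsine_entry[OF B j i] re
    by (simp add: mult.commute complex_eq_iff)
qed

lemma max_norm_ge:
  assumes A: "A \<in> carrier_mat m n" and i: "i < m" and j: "j < n"
  shows "cmod (A$$(i,j)) \<le> max_norm A"
proof -
  have eq: "{cmod (A $$ (i,j)) | i j. i < dim_row A \<and> j < dim_col A} =
      (\<lambda>(i,j). cmod (A$$(i,j))) ` ({..<m} \<times> {..<n})" using A by auto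
  have fin: "finite (insert 0 {cmod (A $$ (i,j)) | i j. i < dim_row A \<and> j < dim_col A})"
    unfolding eq by simp
  show ?thesis unfolding max_norm_def
    by (rule Max_ge[OF fin]) (use A i j in auto)
qed

lemma max_norm_M0:
  assumes A: "A \<in> carrier_mat 0 0" shows "max_norm A = 0"
  unfolding max_norm_def using A by simp

lemma mat_inv_props:
  assumes A: "A \<in> carrier_mat n n" and ex: "\<exists>B\<in>carrier_mat n n. A * B = 1\<^sub>m n \<and> B * A = 1\<^sub>m n"
  shows "mat_inv A \<in> carrier_mat n n \<and> A * mat_inv A = 1\<^sub>m n \<and> mat_inv A * A = 1\<^sub>m n"
proof -
  have "\<exists>B. inverts_mat A B \<and> inverts_mat B A"
    using ex A unfolding inverts_mat_def by (metis carrier_matD(1))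
  hence inv: "inverts_mat A (mat_inv A) \<and> inverts_mat (mat_inv A) A"
    unfolding mat_inv_def by (rule someI_ex)
  define G where "G = mat_inv A"
  have AG: "A * G = 1\<^sub>m n" using inv A unfolding inverts_mat_def G_def by simp
  have GA: "G * A = 1\<^sub>m (dim_row G)" using inv unfolding inverts_mat_def G_def by simp
  have c: "dim_col G = n" using arg_cong[OF AG, of dim_col] by simp
  have r: "dim_row G = n" using arg_cong[OF GA, of dim_col] A by simp
  show ?thesis using AG GA c r unfolding G_def[symmetric] by auto
qed

lemma lambda_min_ev:
  assumes A: "(A::complex mat) \<in> carrier_mat n n" and lm: "\<theta> \<le> lambda_min A" and ev: "eigenvalue A k"
  shows "\<theta> \<le> Re k"
proof -
  have cp: "char_poly A \<noteq> 0" using degree_monic_char_poly[OF A] by auto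
  have "{k. eigenvalue A k} = {k. poly (char_poly A) k = 0}"
    using eigenvalue_root_char_poly[OF A] by auto
  hence fin: "finite (Re ` {k. eigenvalue A k})" using poly_roots_finite[OF cp] by simp
  have "lambda_min A \<le> Re k" unfolding lambda_min_def by (rule Min_le[OF fin]) (use ev in auto)
  thus ?thesis using lm by simp
qed

lemma nsq_ge_comp:
  assumes "x \<in> carrier_vec n" "i < n" shows "(cmod (x$i))\<^sup>2 \<le> nsq x"
  unfolding nsq_def using assms by (intro member_le_sum) auto

lemma fs_ge_entry:
  assumes "A \<in> carrier_mat m n" "i < m" "j < n" shows "(cmod (A$$(i,j)))\<^sup>2 \<le> fs A"
proof -
  have "(cmod (A$$(i,j)))\<^sup>2 \<le> (\<Sum>j<n. (cmod (A$$(i,j)))\<^sup>2)" using assms by (intro member_le_sum) auto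
  also have "\<dots> \<le> (\<Sum>i<m. \<Sum>j<n. (cmod (A$$(i,j)))\<^sup>2)"
    using assms by (intro member_le_sum[of _ _ "\<lambda>i. (\<Sum>j<n. (cmod (A$$(i,j)))\<^sup>2)"]) (auto intro: sum_nonneg)
  finally show ?thesis unfolding fs_def using assms by simp
qed

lemma psd_diag:
  assumes P: "psd_mat Ch" and Ch: "Ch \<in> carrier_mat n n" and i: "i < n"
  shows "0 \<le> Re (Ch$$(i,i))"
proof -
  have e: "unit_vec n i \<in> carrier_vec n" by simp
  have "0 \<le> Re (conjugate (unit_vec n i) \<bullet> (Ch *\<^sub>v unit_vec n i))"
    using P e Ch unfolding psd_mat_def by auto
  also have "conjugate (unit_vec n i) \<bullet> (Ch *\<^sub>v unit_vec n i) = (Ch *\<^sub>v unit_vec n i) $ i"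
  proof -
    have "conjugate (unit_vec n i) \<bullet> (Ch *\<^sub>v unit_vec n i) =
        (\<Sum>l<n. (if l = i then 1 else 0) * (Ch *\<^sub>v unit_vec n i) $ l)"
      unfolding scalar_prod_def using Ch i by (auto simp: atLeast0LessThan intro!: sum.cong)
    also have "\<dots> = (\<Sum>l<n. if l = i then (Ch *\<^sub>v unit_vec n i) $ l else 0)"
      by (intro sum.cong) auto
    also have "\<dots> = (Ch *\<^sub>v unit_vec n i) $ i" using i by (simp add: sum.delta)
    finally show ?thesis .
  qed
  also have "(Ch *\<^sub>v unit_vec n i) $ i = Ch$$(i,i)"
  proof -
    have "(Ch *\<^sub>v unit_vec n i) $ i = (\<Sum>j<n. Ch$$(i,j) * unit_vec n i $ j)" by (rule mv_entry[OF Ch e i])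
    also have "\<dots> = (\<Sum>j<n. if j = i then Ch$$(i,i) else 0)" using i by (intro sum.cong) auto
    also have "\<dots> = Ch$$(i,i)" using i by (simp add: sum.delta')
    finally show ?thesis .
  qed
  finally show ?thesis .
qed

lemma herm_entries:
  assumes H: "hermitian_mat A" and A: "A \<in> carrier_mat n n" and i: "i < n" and j: "j < n"
  shows "A$$(j,i) = cnj (A$$(i,j))"
proof -
  have "mat_adjoint A = A" using H unfolding hermitian_mat_def by simp
  hence "A$$(j,i) = mat_adjoint A $$ (j,i)" by simp
  also have "\<dots> = cnj (A$$(i,j))" by (rule mat_adjoint_entry[OF A j i])
  finally show ?thesis .
qed

lemma final_arith:
  fixes \<theta> eF F op m L :: real
  assumes th: "0 < \<theta>" "\<theta> < 1" and eF: "0 < eF" and F: "0 \<le> F" and op: "0 \<le> op" "op \<le> F"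
    and m: "m = max 1 op" and e1: "eF \<le> \<theta>^4/20" and e2: "eF \<le> \<theta>^5 * F/20"
    and L: "L \<le> 8/\<theta> * (5 * eF\<^sup>2/\<theta>^4 + op\<^sup>2/\<theta>^3 * (34 * eF\<^sup>2/\<theta>^6))"
  shows "L \<le> 20 * \<theta> powi (-6) * m * F * eF"
proof -
  have t6: "0 < \<theta>^6" "\<theta>^6 \<le> 1" using th by (auto simp: power_le_one)
  have m1: "1 \<le> m" "op \<le> m" unfolding m by auto
  have pw: "\<theta> powi (-6) = 1 / \<theta>^6" by (simp add: power_int_minus_divide)
  have "8/\<theta> * (5 * eF\<^sup>2/\<theta>^4 + op\<^sup>2/\<theta>^3 * (34 * eF\<^sup>2/\<theta>^6)) = 40 * eF * eF / \<theta>^5 + 272 * op\<^sup>2 * eF * eF / \<theta>^10"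
    using th by (simp add: field_simps power2_eq_square eval_nat_numeral)
  also have "40 * eF * eF / \<theta>^5 \<le> 40 * eF * (\<theta>^5 * F / 20) / \<theta>^5"
    using e2 eF th by (intro divide_right_mono mult_left_mono) auto
  also have "\<dots> = 2 * F * eF" using th by (simp add: field_simps)
  also have "272 * op\<^sup>2 * eF * eF / \<theta>^10 \<le> 272 * op\<^sup>2 * eF * (\<theta>^4/20) / \<theta>^10"
    using e1 eF th by (intro divide_right_mono mult_left_mono) auto
  also have "\<dots> = 68/5 * op\<^sup>2 * eF / \<theta>^6" using th by (simp add: field_simps eval_nat_numeral)
  finally have L1: "L \<le> 2 * F * eF + 68/5 * op\<^sup>2 * eF / \<theta>^6" using L by linarith
  have "2 * F * eF \<le> 2 * m * F * eF / \<theta>^6"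
  proof -
    have "2 * F * eF \<le> 2 * m * F * eF" using m1 F eF by (simp add: mult_right_mono)
    also have "\<dots> \<le> 2 * m * F * eF / \<theta>^6" using t6 m1 F eF
      by (simp add: le_divide_eq mult_left_le)
    finally show ?thesis .
  qed
  moreover have "68/5 * op\<^sup>2 * eF / \<theta>^6 \<le> 68/5 * m * F * eF / \<theta>^6"
  proof -
    have "op\<^sup>2 \<le> m * F" unfolding power2_eq_square using op m1 by (intro mult_mono) auto
    thus ?thesis using eF t6 by (intro divide_right_mono mult_right_mono) auto
  qed
  ultimately have "L \<le> (2 + 68/5) * m * F * eF / \<theta>^6" using L1 by (simp add: field_simps)
  also have "\<dots> \<le> 20 * m * F * eF / \<theta>^6"
    using m1 F eF t6 by (intro divide_right_mono mult_right_mono) auto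
  finally show ?thesis unfolding pw by simp
qed

lemma cmod_add_sq: "(cmod (a + b))\<^sup>2 \<le> 2 * (cmod a)\<^sup>2 + 2 * (cmod b)\<^sup>2"
proof -
  have "(cmod (a + b))\<^sup>2 \<le> (cmod a + cmod b)\<^sup>2" by (intro power_mono norm_triangle_ineq) auto
  also have "\<dots> \<le> 2 * (cmod a)\<^sup>2 + 2 * (cmod b)\<^sup>2" by (rule sq_sum_le)
  finally show ?thesis .
qed

lemma unit0:
  assumes "0 < n" shows "unit_vec n 0 \<in> carrier_vec n" "nsq (unit_vec n 0) = 1"
proof -
  show "unit_vec n 0 \<in> carrier_vec n" by simp
  have "nsq (unit_vec n 0) = (\<Sum>i<n. if i = 0 then 1 else 0)"
    unfolding nsq_def by (intro sum.cong) auto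
  also have "\<dots> = 1" using assms by (simp add: sum.delta)
  finally show "nsq (unit_vec n 0) = 1" .
qed

lemma mv_unit0:
  fixes A :: "complex mat"
  assumes A: "A \<in> carrier_mat n n" and n: "0 < n"
  shows "(A *\<^sub>v unit_vec n 0) $ 0 = A$$(0,0)"
proof -
  have "(A *\<^sub>v unit_vec n 0) $ 0 = (\<Sum>j<n. A$$(0,j) * unit_vec n 0 $ j)"
    by (rule mv_entry[OF A _ n]) simp
  also have "\<dots> = (\<Sum>j<n. if j = 0 then A$$(0,0) else 0)" by (intro sum.cong) auto
  also have "\<dots> = A$$(0,0)" using n by (simp add: sum.delta)
  finally show ?thesis .
qed

lemma self_cnj_Im: "z = cnj z \<Longrightarrow> Im z = 0"
  by (metis complex_cnj_cancel_iff complex_cnj_zero_iff cnj.simps(2) neg_equal_zero)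

lemma main:
  fixes M :: nat and N0 \<theta> \<epsilon>F \<epsilon>I :: real and Ch Cyhat Cy Cr A Chhat Ahat Crhat :: "complex mat"
  assumes dCy: "Cy = Ch + complex_of_real N0 \<cdot>\<^sub>m 1\<^sub>m M"
   and dCr: "Cr = P_arcsine Cy"
   and dA: "A = complex_of_real (sqrt (2 / pi)) \<cdot>\<^sub>m diag_inv_sqrt Cy"
   and dChh: "Chhat = Cyhat - complex_of_real N0 \<cdot>\<^sub>m 1\<^sub>m M"
   and dAh: "Ahat = complex_of_real (sqrt (2 / pi)) \<cdot>\<^sub>m diag_inv_sqrt Cyhat"
   and dCrh: "Crhat = P_arcsine Cyhat"
   and hyp: "N0 > 0 \<and> Ch \<in> carrier_mat M M \<and> psd_mat Ch \<and>
       0 < \<theta> \<and> \<theta> < 1 \<and>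
       (\<forall>i<M. \<forall>j<M. i \<noteq> j \<longrightarrow>
          cmod ((diag_inv_sqrt Cy * Cy * diag_inv_sqrt Cy) $$ (i,j)) \<le> 1 - \<theta>) \<and>
       (\<forall>i<M. cmod (Cy $$ (i,i)) \<ge> \<theta>) \<and>
       lambda_min Cr \<ge> \<theta> \<and>
       Cyhat \<in> carrier_mat M M \<and> hermitian_mat Cyhat \<and>
       \<epsilon>F > 0 \<and> \<epsilon>I > 0 \<and>
       fro_norm (Cyhat - Cy) < \<epsilon>F \<and> max_norm (Cyhat - Cy) < \<epsilon>I \<and>
       \<epsilon>I \<le> 1/100 * Min {\<epsilon>F / fro_norm Cy, \<theta> ^ 3 / max_norm Cy, \<theta>, 1} \<and>
       \<epsilon>F \<le> 1/20 * min (\<theta> ^ 4) (\<theta> ^ 6 * fro_norm Ch / (max 1 (op_norm Ch) * op_norm Cy))"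
  shows "(\<forall>i<M. Re (Cyhat $$ (i,i)) > 0) \<and>
       (\<forall>i<M. \<forall>j<M.
          \<bar>Re (Cyhat $$ (i,j)) / (sqrt (Re (Cyhat $$ (i,i))) * sqrt (Re (Cyhat $$ (j,j))))\<bar> \<le> 1 \<and>
          \<bar>Im (Cyhat $$ (i,j)) / (sqrt (Re (Cyhat $$ (i,i))) * sqrt (Re (Cyhat $$ (j,j))))\<bar> \<le> 1) \<and>
       invertible_mat Crhat \<and>
       (\<forall>(P::complex vec measure) (r::complex vec \<Rightarrow> complex vec).
          (prob_space P \<and>
           (\<forall>\<omega>\<in>space P. r \<omega> \<in> carrier_vec M) \<and>
           (\<forall>i<M. (\<lambda>\<omega>. r \<omega> $ i) \<in> borel_measurable P \<and>
                   integrable P (\<lambda>\<omega>. (cmod (r \<omega> $ i))\<^sup>2)) \<and>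
           (\<forall>i<M. \<forall>j<M. (LINT \<omega>|P. r \<omega> $ i * cnj (r \<omega> $ j)) = Cr $$ (i,j)))
          \<longrightarrow>
          (integrable P (\<lambda>\<omega>. (vec_norm ((Chhat * mat_adjoint Ahat * mat_inv Crhat) *\<^sub>v r \<omega>
                 - (Ch * mat_adjoint A * mat_inv Cr) *\<^sub>v r \<omega>))\<^sup>2) \<and>
              (LINT \<omega>|P. (vec_norm ((Chhat * mat_adjoint Ahat * mat_inv Crhat) *\<^sub>v r \<omega>
                 - (Ch * mat_adjoint A * mat_inv Cr) *\<^sub>v r \<omega>))\<^sup>2)
                \<le> 20 * \<theta> powi (-6) * max 1 (op_norm Ch) * fro_norm Ch * \<epsilon>F))"
proof -
  from hyp have N0: "N0 > 0" and Ch: "Ch \<in> carrier_mat M M" and psd: "psd_mat Ch"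
    and th0: "0 < \<theta>" and th1: "\<theta> < 1"
    and lmin: "\<theta> \<le> lambda_min Cr"
    and Cyh: "Cyhat \<in> carrier_mat M M" and hCyh0: "hermitian_mat Cyhat"
    and eF0: "0 < \<epsilon>F" and eI0: "0 < \<epsilon>I"
    and fro: "fro_norm (Cyhat - Cy) < \<epsilon>F" and mx: "max_norm (Cyhat - Cy) < \<epsilon>I"
    and eIb: "\<epsilon>I \<le> 1/100 * Min {\<epsilon>F / fro_norm Cy, \<theta> ^ 3 / max_norm Cy, \<theta>, 1}"
    and eFb: "\<epsilon>F \<le> 1/20 * min (\<theta> ^ 4) (\<theta> ^ 6 * fro_norm Ch / (max 1 (op_norm Ch) * op_norm Cy))"
    by auto
  have off: "cmod ((diag_inv_sqrt Cy * Cy * diag_inv_sqrt Cy) $$ (i,j)) \<le> 1 - \<theta>"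
    if "i < M" "j < M" "i \<noteq> j" for i j using hyp that by blast
  have dg: "\<theta> \<le> cmod (Cy $$ (i,i))" if "i < M" for i using hyp that by blast
  define s where "s = sqrt (2 / pi)"
  have s0: "0 \<le> s" "s \<le> 1" "s\<^sup>2 \<le> 1" using pi_gt3 unfolding s_def by (auto simp: real_sqrt_le_1_iff)
  have Cy: "Cy \<in> carrier_mat M M" unfolding dCy using Ch by simp
  have Cy_ent: "Cy$$(i,j) = Ch$$(i,j) + (if i = j then complex_of_real N0 else 0)"
    if "i < M" "j < M" for i j unfolding dCy using Ch that by simp
  have hCh: "Ch$$(j,i) = cnj (Ch$$(i,j))" if "i < M" "j < M" for i j
    using herm_entries[OF _ Ch that] psd unfolding psd_mat_def by auto
  have hCy: "Cy$$(j,i) = cnj (Cy$$(i,j))" if "i < M" "j < M" for i j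
    using that by (simp add: Cy_ent hCh[OF that])
  have hCyh: "Cyhat$$(j,i) = cnj (Cyhat$$(i,j))" if "i < M" "j < M" for i j
    by (rule herm_entries[OF hCyh0 Cyh that])
  have ChIm: "Im (Ch$$(i,i)) = 0" if "i < M" for i by (rule self_cnj_Im[OF hCh[OF that that]])
  have CyhIm: "Im (Cyhat$$(i,i)) = 0" if "i < M" for i by (rule self_cnj_Im[OF hCyh[OF that that]])
  have ChRe: "0 \<le> Re (Ch$$(i,i))" if "i < M" for i by (rule psd_diag[OF psd Ch that])
  define d where "d i = Re (Cy$$(i,i))" for i
  define h where "h i = Re (Cyhat$$(i,i))" for i
  have dval: "d i = Re (Ch$$(i,i)) + N0" if "i < M" for i unfolding d_def using that by (simp add: Cy_ent)
  have CyD: "Cy$$(i,i) = complex_of_real (d i)" if "i < M" for i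
    using ChIm[OF that] dval[OF that] that by (simp add: Cy_ent complex_eq_iff)
  have CyhD: "Cyhat$$(i,i) = complex_of_real (h i)" if "i < M" for i
    using CyhIm[OF that] unfolding h_def by (simp add: complex_eq_iff)
  have dpos: "0 < d i" if "i < M" for i using dval[OF that] ChRe[OF that] N0 by simp
  have dge: "\<theta> \<le> d i" if "i < M" for i using dg[OF that] CyD[OF that] dpos[OF that] by simp
  have ChCy: "cmod (Ch$$(i,j)) \<le> cmod (Cy$$(i,j))" if "i < M" "j < M" for i j
  proof (cases "i = j")
    case True
    have "Ch$$(i,j) = complex_of_real (Re (Ch$$(i,i)))" using True ChIm[OF that(1)] by (simp add: complex_eq_iff)
    hence a: "cmod (Ch$$(i,j)) = Re (Ch$$(i,i))" using ChRe[OF that(1)] by simp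
    have b: "cmod (Cy$$(i,j)) = d i" using True CyD[OF that(1)] dpos[OF that(1)] by simp
    show ?thesis unfolding a b using dval[OF that(1)] N0 by simp
  next
    case False thus ?thesis using Cy_ent[OF that] by simp
  qed
  have Mpos: "0 < M"
  proof (rule ccontr)
    assume "\<not> 0 < M"
    hence M0: "M = 0" by simp
    have "fro_norm Cy = 0" unfolding fro_norm_def using Cy M0 by simp
    moreover have "Min {\<epsilon>F / fro_norm Cy, \<theta> ^ 3 / max_norm Cy, \<theta>, 1} \<le> \<epsilon>F / fro_norm Cy" by simp
    ultimately show False using eIb eI0 by simp
  qed
  have Ed: "Cyhat - Cy \<in> carrier_mat M M" using Cy by (rule minus_carrier_mat)
  have Eent: "(Cyhat - Cy)$$(i,j) = Cyhat$$(i,j) - Cy$$(i,j)" if "i < M" "j < M" for i j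
    using Cy Cyh that by simp
  have eE: "cmod (Cyhat$$(i,j) - Cy$$(i,j)) \<le> \<epsilon>I" if "i < M" "j < M" for i j
    using max_norm_ge[OF Ed that] mx Eent[OF that] by simp
  have fsE: "(\<Sum>i<M. \<Sum>j<M. (cmod (Cyhat$$(i,j) - Cy$$(i,j)))\<^sup>2) \<le> \<epsilon>F\<^sup>2"
  proof -
    have "fs (Cyhat - Cy) = (fro_norm (Cyhat - Cy))\<^sup>2" by (simp add: fro_norm_fs)
    also have "\<dots> \<le> \<epsilon>F\<^sup>2" using fro by (intro power_mono) (auto simp: fro_norm_fs)
    finally have "fs (Cyhat - Cy) \<le> \<epsilon>F\<^sup>2" .
    moreover have "fs (Cyhat - Cy) = (\<Sum>i<M. \<Sum>j<M. (cmod (Cyhat$$(i,j) - Cy$$(i,j)))\<^sup>2)"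
      unfolding fs_def using Ed by (auto intro!: sum.cong simp: Eent)
    ultimately show ?thesis by simp
  qed
  have fsCy: "\<theta>\<^sup>2 \<le> fs Cy"
  proof -
    have "\<theta>\<^sup>2 \<le> (cmod (Cy$$(0,0)))\<^sup>2" using dg[OF Mpos] th0 by (intro power_mono) auto
    also have "\<dots> \<le> fs Cy" by (rule fs_ge_entry[OF Cy Mpos Mpos])
    finally show ?thesis .
  qed
  have fCy: "0 < fro_norm Cy" unfolding fro_norm_fs using fsCy th0
    by (smt (verit) real_sqrt_gt_zero zero_less_power)
  have mCy: "\<theta> \<le> max_norm Cy" using max_norm_ge[OF Cy Mpos Mpos] dg[OF Mpos] by simp
  have mins: "Min {\<epsilon>F / fro_norm Cy, \<theta> ^ 3 / max_norm Cy, \<theta>, 1} \<le> \<epsilon>F / fro_norm Cy"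
    "Min {\<epsilon>F / fro_norm Cy, \<theta> ^ 3 / max_norm Cy, \<theta>, 1} \<le> \<theta> ^ 3 / max_norm Cy"
    "Min {\<epsilon>F / fro_norm Cy, \<theta> ^ 3 / max_norm Cy, \<theta>, 1} \<le> \<theta>" by simp_all
  have eI1: "\<epsilon>I * fro_norm Cy \<le> \<epsilon>F / 100"
    using eIb mins(1) fCy by (simp add: field_simps)
  have eI1sq: "\<epsilon>I\<^sup>2 * fs Cy \<le> \<epsilon>F\<^sup>2 / 10000"
  proof -
    have "(\<epsilon>I * fro_norm Cy)\<^sup>2 \<le> (\<epsilon>F / 100)\<^sup>2" using eI1 eI0 fCy by (intro power_mono) auto
    thus ?thesis by (simp add: power_mult_distrib fro_norm_fs power_divide)
  qed
  have eI2: "\<epsilon>I * max_norm Cy \<le> \<theta>^3 / 100"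
    using eIb mins(2) mCy th0 by (simp add: field_simps)
  have eI3: "\<epsilon>I \<le> \<theta> / 100" using eIb mins(3) by simp
  have eI4: "\<epsilon>I \<le> \<theta>\<^sup>2 / 100"
  proof -
    have "\<epsilon>I * \<theta> \<le> \<epsilon>I * max_norm Cy" using mCy eI0 by simp
    also have "\<dots> \<le> \<theta>^3 / 100" by (rule eI2)
    finally show ?thesis using th0 by (simp add: field_simps power2_eq_square power3_eq_cube)
  qed
  have eF1: "\<epsilon>F \<le> \<theta>^4 / 20" using eFb by simp
  have opCy: "\<theta> \<le> op_norm Cy"
  proof -
    have "\<theta> \<le> cmod ((Cy *\<^sub>v unit_vec M 0) $ 0)" using dg[OF Mpos] mv_unit0[OF Cy Mpos] by simp
    also have "\<dots> = sqrt ((cmod ((Cy *\<^sub>v unit_vec M 0) $ 0))\<^sup>2)" by simp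
    also have "\<dots> \<le> sqrt (nsq (Cy *\<^sub>v unit_vec M 0))"
      using nsq_ge_comp[of "Cy *\<^sub>v unit_vec M 0" M 0] Cy Mpos by (simp add: real_le_rsqrt)
    also have "\<dots> = vec_norm (Cy *\<^sub>v unit_vec M 0)" by (simp add: vec_norm_nsq)
    also have "\<dots> \<le> op_norm Cy" by (rule op_norm_ge[OF Cy unit0(1)[OF Mpos]]) (simp add: unit0(2)[OF Mpos])
    finally show ?thesis .
  qed
  have opCh0: "0 \<le> op_norm Ch" by (rule op_norm_nonneg[OF Ch])
  have eF2: "\<epsilon>F \<le> \<theta>^5 * fro_norm Ch / 20"
  proof -
    have m1: "1 \<le> max 1 (op_norm Ch)" by simp
    have "\<theta> \<le> max 1 (op_norm Ch) * op_norm Cy" using opCy m1 th0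
      by (metis mult_1 mult_right_mono order_trans less_imp_le)
    hence "\<theta>^6 * fro_norm Ch / (max 1 (op_norm Ch) * op_norm Cy) \<le> \<theta>^6 * fro_norm Ch / \<theta>"
      using th0 by (intro divide_left_mono) (auto simp: fro_norm_fs)
    also have "\<dots> = \<theta>^5 * fro_norm Ch" using th0 by (simp add: eval_nat_numeral)
    finally show ?thesis using eFb by simp
  qed
  have hd: "\<bar>h i - d i\<bar> \<le> \<epsilon>I" if "i < M" for i
  proof -
    have "\<bar>h i - d i\<bar> = \<bar>Re (Cyhat$$(i,i) - Cy$$(i,i))\<bar>" unfolding h_def d_def by simp
    also have "\<dots> \<le> cmod (Cyhat$$(i,i) - Cy$$(i,i))" by (rule abs_Re_le_cmod)
    also have "\<dots> \<le> \<epsilon>I" by (rule eE[OF that that])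
    finally show ?thesis .
  qed
  have eIh: "\<epsilon>I \<le> \<theta>/2" using eI3 th0 by simp
  have hge: "\<theta>/2 \<le> h i" if "i < M" for i using hd[OF that] dge[OF that] eIh by linarith
  have hpos: "0 < h i" if "i < M" for i using hge[OF that] th0 by linarith
  have concl1: "\<forall>i<M. Re (Cyhat $$ (i,i)) > 0" using hpos unfolding h_def by blast
  define a where "a i j = 1 / (sqrt (d i) * sqrt (d j))" for i j
  define ah where "ah i j = 1 / (sqrt (h i) * sqrt (h j))" for i j
  have pb: "\<bar>ah i j - a i j\<bar> \<le> 6 * \<epsilon>I / \<theta>\<^sup>2" "0 < ah i j" "ah i j \<le> 2 / \<theta>" if "i < M" "j < M" for i j
    using pair_bound[OF th0 dge[OF that(1)] dge[OF that(2)] hd[OF that(1)] hd[OF that(2)] eIh]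
    unfolding a_def ah_def by auto
  have apos: "0 < a i j" if "i < M" "j < M" for i j unfolding a_def using dpos that by simp
  define R where "R i j = Re (Cy$$(i,j)) * a i j" for i j
  define Rh where "Rh i j = Re (Cyhat$$(i,j)) * ah i j" for i j
  define Iy where "Iy i j = Im (Cy$$(i,j)) * a i j" for i j
  define Ih where "Ih i j = Im (Cyhat$$(i,j)) * ah i j" for i j
  have Rdef: "Re (Cy $$ (i,j)) / (sqrt (Re (Cy $$ (i,i))) * sqrt (Re (Cy $$ (j,j)))) = R i j"
    "Im (Cy $$ (i,j)) / (sqrt (Re (Cy $$ (i,i))) * sqrt (Re (Cy $$ (j,j)))) = Iy i j"
    "Re (Cyhat $$ (i,j)) / (sqrt (Re (Cyhat $$ (i,i))) * sqrt (Re (Cyhat $$ (j,j)))) = Rh i j"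
    "Im (Cyhat $$ (i,j)) / (sqrt (Re (Cyhat $$ (i,i))) * sqrt (Re (Cyhat $$ (j,j)))) = Ih i j" for i j
    unfolding R_def Rh_def Iy_def Ih_def a_def ah_def d_def h_def by simp_all
  have diagR: "R i i = 1" "Iy i i = 0" "Rh i i = 1" "Ih i i = 0" if "i < M" for i
  proof -
    have "R i i = d i / (sqrt (d i) * sqrt (d i))" unfolding R_def a_def d_def by simp
    also have "\<dots> = 1" using dpos[OF that] by simp
    finally show "R i i = 1" .
    show "Iy i i = 0" unfolding Iy_def using CyD[OF that] by simp
    have "Rh i i = h i / (sqrt (h i) * sqrt (h i))" unfolding Rh_def ah_def h_def by simp
    also have "\<dots> = 1" using hpos[OF that] by simp
    finally show "Rh i i = 1" .
    show "Ih i i = 0" unfolding Ih_def using CyhD[OF that] by simp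
  qed
  have offR: "\<bar>R i j\<bar> \<le> 1 - \<theta>" "\<bar>Iy i j\<bar> \<le> 1 - \<theta>" if "i < M" "j < M" "i \<noteq> j" for i j
  proof -
    have ent: "(diag_inv_sqrt Cy * Cy * diag_inv_sqrt Cy) $$ (i,j) = complex_of_real (a i j) * Cy$$(i,j)"
      unfolding dmd_entry[OF Cy that(1,2)] a_def d_def by (simp add: algebra_simps)
    have "\<bar>R i j\<bar> = \<bar>Re (complex_of_real (a i j) * Cy$$(i,j))\<bar>" unfolding R_def by (simp add: mult.commute)
    also have "\<dots> \<le> cmod (complex_of_real (a i j) * Cy$$(i,j))" by (rule abs_Re_le_cmod)
    also have "\<dots> \<le> 1 - \<theta>" using off[OF that] ent by simp
    finally show "\<bar>R i j\<bar> \<le> 1 - \<theta>" .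
    have "\<bar>Iy i j\<bar> = \<bar>Im (complex_of_real (a i j) * Cy$$(i,j))\<bar>" unfolding Iy_def by (simp add: mult.commute)
    also have "\<dots> \<le> cmod (complex_of_real (a i j) * Cy$$(i,j))" by (rule abs_Im_le_cmod)
    also have "\<dots> \<le> 1 - \<theta>" using off[OF that] ent by simp
    finally show "\<bar>Iy i j\<bar> \<le> 1 - \<theta>" .
  qed
  have xbound: "\<bar>xh * ah i j - x * a i j\<bar> \<le> \<theta>/2"
    "(xh * ah i j - x * a i j)\<^sup>2 \<le> 8 * (cmod (Cyhat$$(i,j) - Cy$$(i,j)))\<^sup>2 / \<theta>\<^sup>2
        + 72 * \<epsilon>I\<^sup>2 * (cmod (Cy$$(i,j)))\<^sup>2 / \<theta>^4"
    if ij: "i < M" "j < M" and xx: "\<bar>xh - x\<bar> \<le> cmod (Cyhat$$(i,j) - Cy$$(i,j))" and x: "\<bar>x\<bar> \<le> cmod (Cy$$(i,j))"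
    for i j x xh
  proof -
    note rb = ratio_bound[OF th0 _ pb(1)[OF ij], of xh x]
    have ahb: "\<bar>ah i j\<bar> \<le> 2/\<theta>" using pb(2,3)[OF ij] by simp
    have "\<bar>xh * ah i j - x * a i j\<bar> \<le> \<bar>xh - x\<bar> * (2/\<theta>) + \<bar>x\<bar> * (6 * \<epsilon>I / \<theta>\<^sup>2)"
      by (rule rb(1)[OF ahb])
    also have "\<dots> \<le> \<epsilon>I * (2/\<theta>) + max_norm Cy * (6 * \<epsilon>I / \<theta>\<^sup>2)"
    proof (intro add_mono mult_right_mono)
      show "\<bar>xh - x\<bar> \<le> \<epsilon>I" using xx eE[OF ij] by linarith
      show "\<bar>x\<bar> \<le> max_norm Cy" using x max_norm_ge[OF Cy ij] by linarith
    qed (use th0 eI0 in auto)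
    also have "\<dots> = 2 * \<epsilon>I / \<theta> + 6 * (\<epsilon>I * max_norm Cy) / \<theta>\<^sup>2" by (simp add: field_simps)
    also have "\<dots> \<le> 2 * (\<theta>\<^sup>2/100) / \<theta> + 6 * (\<theta>^3/100) / \<theta>\<^sup>2"
      using eI4 eI2 th0 by (intro add_mono divide_right_mono mult_left_mono) auto
    also have "\<dots> = 8 * \<theta> / 100" using th0 by (simp add: field_simps power2_eq_square power3_eq_cube)
    also have "\<dots> \<le> \<theta>/2" using th0 by simp
    finally show "\<bar>xh * ah i j - x * a i j\<bar> \<le> \<theta>/2" .
    have "(xh * ah i j - x * a i j)\<^sup>2 \<le> 8 * (xh - x)\<^sup>2 / \<theta>\<^sup>2 + 72 * \<epsilon>I\<^sup>2 * x\<^sup>2 / \<theta>^4"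
      by (rule rb(2)[OF ahb])
    also have "\<dots> \<le> 8 * (cmod (Cyhat$$(i,j) - Cy$$(i,j)))\<^sup>2 / \<theta>\<^sup>2 + 72 * \<epsilon>I\<^sup>2 * (cmod (Cy$$(i,j)))\<^sup>2 / \<theta>^4"
    proof (intro add_mono divide_right_mono mult_left_mono)
      show "(xh - x)\<^sup>2 \<le> (cmod (Cyhat$$(i,j) - Cy$$(i,j)))\<^sup>2"
        using xx by (metis abs_ge_zero power2_abs power_mono)
      show "x\<^sup>2 \<le> (cmod (Cy$$(i,j)))\<^sup>2" using x by (metis abs_ge_zero power2_abs power_mono)
    qed auto
    finally show "(xh * ah i j - x * a i j)\<^sup>2 \<le> 8 * (cmod (Cyhat$$(i,j) - Cy$$(i,j)))\<^sup>2 / \<theta>\<^sup>2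
        + 72 * \<epsilon>I\<^sup>2 * (cmod (Cy$$(i,j)))\<^sup>2 / \<theta>^4" .
  qed
  have reb: "\<bar>Re (Cyhat$$(i,j)) - Re (Cy$$(i,j))\<bar> \<le> cmod (Cyhat$$(i,j) - Cy$$(i,j))"
    "\<bar>Im (Cyhat$$(i,j)) - Im (Cy$$(i,j))\<bar> \<le> cmod (Cyhat$$(i,j) - Cy$$(i,j))"
    "\<bar>Re (Cy$$(i,j))\<bar> \<le> cmod (Cy$$(i,j))" "\<bar>Im (Cy$$(i,j))\<bar> \<le> cmod (Cy$$(i,j))" for i j
    using abs_Re_le_cmod[of "Cyhat$$(i,j) - Cy$$(i,j)"] abs_Im_le_cmod[of "Cyhat$$(i,j) - Cy$$(i,j)"]
      abs_Re_le_cmod[of "Cy$$(i,j)"] abs_Im_le_cmod[of "Cy$$(i,j)"] by simp_all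
  have dR: "\<bar>Rh i j - R i j\<bar> \<le> \<theta>/2" "\<bar>Ih i j - Iy i j\<bar> \<le> \<theta>/2"
    "(Rh i j - R i j)\<^sup>2 \<le> 8 * (cmod (Cyhat$$(i,j) - Cy$$(i,j)))\<^sup>2 / \<theta>\<^sup>2 + 72 * \<epsilon>I\<^sup>2 * (cmod (Cy$$(i,j)))\<^sup>2 / \<theta>^4"
    "(Ih i j - Iy i j)\<^sup>2 \<le> 8 * (cmod (Cyhat$$(i,j) - Cy$$(i,j)))\<^sup>2 / \<theta>\<^sup>2 + 72 * \<epsilon>I\<^sup>2 * (cmod (Cy$$(i,j)))\<^sup>2 / \<theta>^4"
    if "i < M" "j < M" for i j
    unfolding R_def Rh_def Iy_def Ih_def
    using xbound[OF that reb(1,3)] xbound[OF that reb(2,4)] by auto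
  have hatb: "\<bar>Rh i j\<bar> \<le> 1 - \<theta>/2" "\<bar>Ih i j\<bar> \<le> 1 - \<theta>/2" if "i < M" "j < M" "i \<noteq> j" for i j
    using offR[OF that] dR[OF that(1,2)] by linarith+
  have hat1: "\<bar>Rh i j\<bar> \<le> 1" "\<bar>Ih i j\<bar> \<le> 1" "\<bar>Iy i j\<bar> \<le> 1" if "i < M" "j < M" for i j
  proof (atomize(full), cases "i = j")
    case True thus "\<bar>Rh i j\<bar> \<le> 1 \<and> \<bar>Ih i j\<bar> \<le> 1 \<and> \<bar>Iy i j\<bar> \<le> 1" using diagR[OF that(1)] by simp
  next
    case False thus "\<bar>Rh i j\<bar> \<le> 1 \<and> \<bar>Ih i j\<bar> \<le> 1 \<and> \<bar>Iy i j\<bar> \<le> 1"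
      using hatb[OF that False] offR[OF that False] th0 by linarith
  qed
  have concl2: "\<forall>i<M. \<forall>j<M.
          \<bar>Re (Cyhat $$ (i,j)) / (sqrt (Re (Cyhat $$ (i,i))) * sqrt (Re (Cyhat $$ (j,j))))\<bar> \<le> 1 \<and>
          \<bar>Im (Cyhat $$ (i,j)) / (sqrt (Re (Cyhat $$ (i,i))) * sqrt (Re (Cyhat $$ (j,j))))\<bar> \<le> 1"
    unfolding Rdef using hat1 by blast
  have Crc: "Cr \<in> carrier_mat M M" unfolding dCr by (rule P_arcsine_carrier[OF Cy])
  have Crhc: "Crhat \<in> carrier_mat M M" unfolding dCrh by (rule P_arcsine_carrier[OF Cyh])
  have Cr_ent: "Cr$$(i,j) = complex_of_real (2/pi) * (complex_of_real (arcsin (R i j)) + \<i> * complex_of_real (arcsin (Iy i j)))"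
    if "i < M" "j < M" for i j
    unfolding dCr P_arcsine_entry[OF Cy that] Rdef ..
  have Crh_ent: "Crhat$$(i,j) = complex_of_real (2/pi) * (complex_of_real (arcsin (Rh i j)) + \<i> * complex_of_real (arcsin (Ih i j)))"
    if "i < M" "j < M" for i j
    unfolding dCrh P_arcsine_entry[OF Cyh that] Rdef ..
  define Bd where "Bd i j = 2/\<theta> * (16 * (cmod (Cyhat$$(i,j) - Cy$$(i,j)))\<^sup>2 / \<theta>\<^sup>2
      + 144 * \<epsilon>I\<^sup>2 * (cmod (Cy$$(i,j)))\<^sup>2 / \<theta>^4)" for i j
  have Bd0: "0 \<le> Bd i j" for i j unfolding Bd_def using th0 by simp
  have Bd_alt: "Bd i j = 32 / \<theta>^3 * (cmod (Cyhat$$(i,j) - Cy$$(i,j)))\<^sup>2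
      + 288 * \<epsilon>I\<^sup>2 / \<theta>^5 * (cmod (Cy$$(i,j)))\<^sup>2" for i j
    unfolding Bd_def using th0 by (simp add: field_simps eval_nat_numeral)
  have Crdiff: "(cmod (Cr$$(i,j) - Crhat$$(i,j)))\<^sup>2 \<le> Bd i j" if ij: "i < M" "j < M" for i j
  proof (cases "i = j")
    case True
    have "Cr$$(i,j) = Crhat$$(i,j)" unfolding Cr_ent[OF ij] Crh_ent[OF ij] using diagR[OF ij(1)] True by simp
    thus ?thesis using Bd0 by simp
  next
    case False
    have "(cmod (Cr$$(i,j) - Crhat$$(i,j)))\<^sup>2 \<le> (arcsin (R i j) - arcsin (Rh i j))\<^sup>2 + (arcsin (Iy i j) - arcsin (Ih i j))\<^sup>2"
      unfolding Cr_ent[OF ij] Crh_ent[OF ij] by (rule cr_entry_diff)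
    also have "\<dots> \<le> 2/\<theta> * (R i j - Rh i j)\<^sup>2 + 2/\<theta> * (Iy i j - Ih i j)\<^sup>2"
    proof (intro add_mono asin_half[OF th0 th1])
      show "\<bar>R i j\<bar> \<le> 1 - \<theta>/2" "\<bar>Iy i j\<bar> \<le> 1 - \<theta>/2" using offR[OF ij False] th0 by linarith+
      show "\<bar>Rh i j\<bar> \<le> 1 - \<theta>/2" "\<bar>Ih i j\<bar> \<le> 1 - \<theta>/2" using hatb[OF ij False] by auto
    qed
    also have "\<dots> = 2/\<theta> * ((Rh i j - R i j)\<^sup>2 + (Ih i j - Iy i j)\<^sup>2)" by (simp add: power2_commute algebra_simps)
    also have "\<dots> \<le> Bd i j" unfolding Bd_def
      using dR(3,4)[OF ij] th0 by (intro mult_left_mono) auto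
    finally show ?thesis .
  qed
  have Dc: "Cr - Crhat \<in> carrier_mat M M" using Crhc by (rule minus_carrier_mat)
  have fsD: "fs (Cr - Crhat) \<le> 34 * \<epsilon>F\<^sup>2 / \<theta>^6"
  proof -
    have "fs (Cr - Crhat) = (\<Sum>i<M. \<Sum>j<M. (cmod (Cr$$(i,j) - Crhat$$(i,j)))\<^sup>2)"
      unfolding fs_def using Dc Crc Crhc by (auto intro!: sum.cong)
    also have "\<dots> \<le> (\<Sum>i<M. \<Sum>j<M. Bd i j)" by (intro sum_mono Crdiff) auto
    also have "\<dots> = 32 / \<theta>^3 * (\<Sum>i<M. \<Sum>j<M. (cmod (Cyhat$$(i,j) - Cy$$(i,j)))\<^sup>2)
        + 288 * \<epsilon>I\<^sup>2 / \<theta>^5 * fs Cy"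
      unfolding Bd_alt fs_def using Cy by (simp add: sum_distrib_left sum.distrib)
    also have "\<dots> \<le> 32 / \<theta>^3 * \<epsilon>F\<^sup>2 + 288 / \<theta>^5 * (\<epsilon>F\<^sup>2 / 10000)"
    proof (intro add_mono)
      show "32 / \<theta>^3 * (\<Sum>i<M. \<Sum>j<M. (cmod (Cyhat$$(i,j) - Cy$$(i,j)))\<^sup>2) \<le> 32 / \<theta>^3 * \<epsilon>F\<^sup>2"
        using fsE th0 by (intro mult_left_mono) auto
      have "288 * \<epsilon>I\<^sup>2 / \<theta>^5 * fs Cy = 288 / \<theta>^5 * (\<epsilon>I\<^sup>2 * fs Cy)" by simp
      also have "\<dots> \<le> 288 / \<theta>^5 * (\<epsilon>F\<^sup>2 / 10000)" using eI1sq th0 by (intro mult_left_mono) auto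
      finally show "288 * \<epsilon>I\<^sup>2 / \<theta>^5 * fs Cy \<le> 288 / \<theta>^5 * (\<epsilon>F\<^sup>2 / 10000)" .
    qed
    also have "\<dots> \<le> 34 * \<epsilon>F\<^sup>2 / \<theta>^6"
    proof -
      have t: "\<theta>^6 \<le> \<theta>^5" "\<theta>^6 \<le> \<theta>^3" using th0 th1 by (auto intro!: power_decreasing)
      have "32 / \<theta>^3 * \<epsilon>F\<^sup>2 + 288 / \<theta>^5 * (\<epsilon>F\<^sup>2 / 10000) = 32 * \<epsilon>F\<^sup>2 / \<theta>^3 + 18/625 * \<epsilon>F\<^sup>2 / \<theta>^5"
        using th0 by (simp add: field_simps)
      also have "\<dots> \<le> 32 * \<epsilon>F\<^sup>2 / \<theta>^6 + 18/625 * \<epsilon>F\<^sup>2 / \<theta>^6"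
        using t th0 by (intro add_mono divide_left_mono) auto
      also have "\<dots> \<le> 34 * \<epsilon>F\<^sup>2 / \<theta>^6" using th0 by (simp add: field_simps)
      finally show ?thesis .
    qed
    finally show ?thesis .
  qed
  have fsd: "fs (Cr - Crhat) \<le> \<theta>\<^sup>2 / 4"
  proof -
    have "\<epsilon>F\<^sup>2 \<le> (\<theta>^4/20)\<^sup>2" using eF1 eF0 by (intro power_mono) auto
    hence "34 * \<epsilon>F\<^sup>2 / \<theta>^6 \<le> 34 * (\<theta>^4/20)\<^sup>2 / \<theta>^6" using th0 by (intro divide_right_mono) auto
    also have "\<dots> = 17/200 * \<theta>\<^sup>2" using th0 by (simp add: field_simps eval_nat_numeral)
    also have "\<dots> \<le> \<theta>\<^sup>2 / 4" by simp
    finally show ?thesis using fsD by linarith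
  qed
  have hCr: "Cr$$(j,i) = cnj (Cr$$(i,j))" if "i < M" "j < M" for i j
    unfolding dCr by (rule P_arcsine_herm[OF Cy hCy _ that]) (use hat1 Rdef in auto)
  have hCrh: "Crhat$$(j,i) = cnj (Crhat$$(i,j))" if "i < M" "j < M" for i j
    unfolding dCrh by (rule P_arcsine_herm[OF Cyh hCyh _ that]) (use hat1 Rdef in auto)
  have ev: "\<theta> \<le> Re k" if "eigenvalue Cr k" for k by (rule lambda_min_ev[OF Crc lmin that])
  have lb: "\<theta> * nsq x \<le> Re (qf Cr x)" if "x \<in> carrier_vec M" for x
    by (rule spectral_lb[OF Crc Mpos hCr ev that])
  have sfs: "sqrt (fs (Cr - Crhat)) \<le> \<theta>/2"
  proof -
    have "sqrt (fs (Cr - Crhat)) \<le> sqrt ((\<theta>/2)\<^sup>2)" using fsd by (intro real_sqrt_le_mono) (simp add: power_divide)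
    thus ?thesis using th0 by simp
  qed
  have qf0: "qf K v = 0" if "K \<in> carrier_mat M M" "v \<in> carrier_vec M" "K *\<^sub>v v = 0\<^sub>v M" for K v
    unfolding qf_alt[OF that(1,2)] using that(3) by simp
  have injCr: "v = 0\<^sub>v M" if "v \<in> carrier_vec M" "Cr *\<^sub>v v = 0\<^sub>v M" for v
  proof -
    have "\<theta> * nsq v \<le> 0" using lb[OF that(1)] qf0[OF Crc that] by simp
    hence "nsq v = 0" using th0 nsq_nonneg[of v] by (simp add: mult_le_0_iff)
    thus ?thesis by (rule nsq_zero_imp[OF that(1)])
  qed
  have injCrh: "v = 0\<^sub>v M" if "v \<in> carrier_vec M" "Crhat *\<^sub>v v = 0\<^sub>v M" for v
  proof -
    have "qf Cr v = qf Crhat v + qf (Cr - Crhat) v" using qf_minus_mat[OF Crc Crhc that(1)] by simp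
    hence "qf Cr v = qf (Cr - Crhat) v" using qf0[OF Crhc that] by simp
    hence "\<theta> * nsq v \<le> cmod (qf (Cr - Crhat) v)" using lb[OF that(1)] abs_Re_le_cmod[of "qf (Cr - Crhat) v"] by simp
    also have "\<dots> \<le> sqrt (fs (Cr - Crhat)) * nsq v" by (rule qfb[OF Dc that(1)])
    also have "\<dots> \<le> \<theta>/2 * nsq v" using sfs by (intro mult_right_mono) auto
    finally have "\<theta> * nsq v \<le> \<theta>/2 * nsq v" .
    hence "\<theta>/2 * nsq v \<le> 0" by linarith
    hence "nsq v \<le> 0" using th0 by (simp add: mult_le_0_iff)
    hence "nsq v = 0" using nsq_nonneg[of v] by linarith
    thus ?thesis by (rule nsq_zero_imp[OF that(1)])
  qed
  define G where "G = mat_inv Cr"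
  define Gh where "Gh = mat_inv Crhat"
  have Gp: "G \<in> carrier_mat M M \<and> Cr * G = 1\<^sub>m M \<and> G * Cr = 1\<^sub>m M"
    unfolding G_def by (rule mat_inv_props[OF Crc inj_imp_inv[OF Crc injCr]])
  have Ghp: "Gh \<in> carrier_mat M M \<and> Crhat * Gh = 1\<^sub>m M \<and> Gh * Crhat = 1\<^sub>m M"
    unfolding Gh_def by (rule mat_inv_props[OF Crhc inj_imp_inv[OF Crhc injCrh]])
  have concl3: "invertible_mat Crhat"
    unfolding invertible_mat_def inverts_mat_def using Crhc Ghp by (intro conjI exI[of _ Gh]) auto
  have Gc: "G \<in> carrier_mat M M" and CrG: "Cr * G = 1\<^sub>m M" and GCr: "G * Cr = 1\<^sub>m M" using Gp by auto
  have Ghc: "Gh \<in> carrier_mat M M" and GhCrh: "Gh * Crhat = 1\<^sub>m M" using Ghp by auto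
  have th1': "\<theta> \<le> 1" using th1 by simp
  have Chhc: "Chhat \<in> carrier_mat M M" unfolding dChh using Cyh by (intro minus_carrier_mat) auto
  have Chh_ent: "Chhat$$(k,j) = Ch$$(k,j) + (Cyhat$$(k,j) - Cy$$(k,j))" if "k < M" "j < M" for k j
    unfolding dChh using Cyh that by (simp add: Cy_ent)
  have adjAc: "mat_adjoint A \<in> carrier_mat M M" unfolding dA by (rule adjA_carrier[OF Cy])
  have adjAhc: "mat_adjoint Ahat \<in> carrier_mat M M" unfolding dAh by (rule adjA_carrier[OF Cyh])
  have adjA_ent: "mat_adjoint A $$ (i,j) = (if i = j then complex_of_real (s / sqrt (d i)) else 0)"
    if "i < M" "j < M" for i j unfolding dA adjA_entry[OF Cy that] s_def d_def ..
  have Yc: "Ch * mat_adjoint A \<in> carrier_mat M M" using Ch adjAc by simp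
  have Yhc: "Chhat * mat_adjoint Ahat \<in> carrier_mat M M" using Chhc adjAhc by simp
  have Y_ent: "(Ch * mat_adjoint A)$$(k,j) = Ch$$(k,j) * complex_of_real (s / sqrt (d j))"
    if "k < M" "j < M" for k j unfolding dA mult_adjA_entry[OF Cy Ch that] s_def d_def ..
  have Yh_ent: "(Chhat * mat_adjoint Ahat)$$(k,j) = Chhat$$(k,j) * complex_of_real (s / sqrt (h j))"
    if "k < M" "j < M" for k j unfolding dAh mult_adjA_entry[OF Cyh Chhc that] s_def h_def ..
  have Yent_b: "(cmod ((Chhat * mat_adjoint Ahat)$$(k,j) - (Ch * mat_adjoint A)$$(k,j)))\<^sup>2
      \<le> 4/\<theta> * (cmod (Cyhat$$(k,j) - Cy$$(k,j)))\<^sup>2 + 8 * \<epsilon>I\<^sup>2 / \<theta>^4 * (cmod (Cy$$(k,j)))\<^sup>2"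
    if kj: "k < M" "j < M" for k j
  proof -
    let ?E = "Cyhat$$(k,j) - Cy$$(k,j)"
    have eq: "(Chhat * mat_adjoint Ahat)$$(k,j) - (Ch * mat_adjoint A)$$(k,j)
        = ?E * complex_of_real (s / sqrt (h j)) + Ch$$(k,j) * complex_of_real (s * (1 / sqrt (h j) - 1 / sqrt (d j)))"
      unfolding Yh_ent[OF kj] Y_ent[OF kj] Chh_ent[OF kj] by (simp add: algebra_simps)
    have b1: "(cmod (?E * complex_of_real (s / sqrt (h j))))\<^sup>2 \<le> (cmod ?E)\<^sup>2 * (2/\<theta>)"
    proof -
      have cm: "cmod (complex_of_real (s / sqrt (h j))) = s / sqrt (h j)"
        unfolding norm_of_real using s0 hpos[OF kj(2)] by simp
      have "(cmod (?E * complex_of_real (s / sqrt (h j))))\<^sup>2 = (cmod ?E)\<^sup>2 * (s / sqrt (h j))\<^sup>2"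
        by (simp only: norm_mult cm power_mult_distrib)
      also have "(s / sqrt (h j))\<^sup>2 = s\<^sup>2 / h j" using hpos[OF kj(2)] by (simp add: power_divide)
      finally have "(cmod (?E * complex_of_real (s / sqrt (h j))))\<^sup>2 = (cmod ?E)\<^sup>2 * (s\<^sup>2 / h j)" .
      also have "\<dots> \<le> (cmod ?E)\<^sup>2 * (2/\<theta>)"
      proof (intro mult_left_mono)
        have "s\<^sup>2 / h j \<le> 1 / h j" using s0 hpos[OF kj(2)] by (intro divide_right_mono) auto
        also have "\<dots> \<le> 1 / (\<theta>/2)" using hge[OF kj(2)] th0 by (intro divide_left_mono) auto
        finally show "s\<^sup>2 / h j \<le> 2/\<theta>" by simp
      qed auto
      finally show ?thesis .
    qed
    have b2: "(cmod (Ch$$(k,j) * complex_of_real (s * (1 / sqrt (h j) - 1 / sqrt (d j)))))\<^sup>2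
        \<le> (cmod (Cy$$(k,j)))\<^sup>2 * (2 * \<epsilon>I / \<theta>\<^sup>2)\<^sup>2"
    proof -
      have sb: "\<bar>1 / sqrt (h j) - 1 / sqrt (d j)\<bar> \<le> 2 * \<epsilon>I / \<theta>\<^sup>2"
        by (rule single_bound[OF th0 th1' dge[OF kj(2)] hd[OF kj(2)] eIh])
      have "\<bar>s * (1 / sqrt (h j) - 1 / sqrt (d j))\<bar> \<le> 1 * (2 * \<epsilon>I / \<theta>\<^sup>2)"
        unfolding abs_mult using s0 sb by (intro mult_mono) auto
      hence "\<bar>s * (1 / sqrt (h j) - 1 / sqrt (d j))\<bar> \<le> 2 * \<epsilon>I / \<theta>\<^sup>2" by simp
      hence "(cmod (complex_of_real (s * (1 / sqrt (h j) - 1 / sqrt (d j)))))\<^sup>2 \<le> (2 * \<epsilon>I / \<theta>\<^sup>2)\<^sup>2"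
        unfolding norm_of_real by (intro power_mono) auto
      moreover have "(cmod (Ch$$(k,j)))\<^sup>2 \<le> (cmod (Cy$$(k,j)))\<^sup>2" using ChCy[OF kj] by (intro power_mono) auto
      ultimately show ?thesis unfolding norm_mult power_mult_distrib by (intro mult_mono) auto
    qed
    have "(cmod ((Chhat * mat_adjoint Ahat)$$(k,j) - (Ch * mat_adjoint A)$$(k,j)))\<^sup>2
        \<le> 2 * (cmod (?E * complex_of_real (s / sqrt (h j))))\<^sup>2
          + 2 * (cmod (Ch$$(k,j) * complex_of_real (s * (1 / sqrt (h j) - 1 / sqrt (d j)))))\<^sup>2"
      unfolding eq by (rule cmod_add_sq)
    also have "\<dots> \<le> 2 * ((cmod ?E)\<^sup>2 * (2/\<theta>)) + 2 * ((cmod (Cy$$(k,j)))\<^sup>2 * (2 * \<epsilon>I / \<theta>\<^sup>2)\<^sup>2)"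
      using b1 b2 by linarith
    also have "\<dots> = 4/\<theta> * (cmod ?E)\<^sup>2 + 8 * \<epsilon>I\<^sup>2 / \<theta>^4 * (cmod (Cy$$(k,j)))\<^sup>2"
      by (simp add: power_mult_distrib power_divide field_simps eval_nat_numeral)
    finally show ?thesis .
  qed
  have fsY: "fs (Chhat * mat_adjoint Ahat - Ch * mat_adjoint A) \<le> 5 * \<epsilon>F\<^sup>2 / \<theta>^4"
  proof -
    have "fs (Chhat * mat_adjoint Ahat - Ch * mat_adjoint A) =
        (\<Sum>k<M. \<Sum>j<M. (cmod ((Chhat * mat_adjoint Ahat)$$(k,j) - (Ch * mat_adjoint A)$$(k,j)))\<^sup>2)"
      unfolding fs_def using Yc Yhc by (auto intro!: sum.cong simp del: index_mult_mat(1))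
    also have "\<dots> \<le> (\<Sum>k<M. \<Sum>j<M. 4/\<theta> * (cmod (Cyhat$$(k,j) - Cy$$(k,j)))\<^sup>2 + 8 * \<epsilon>I\<^sup>2 / \<theta>^4 * (cmod (Cy$$(k,j)))\<^sup>2)"
      by (intro sum_mono Yent_b) auto
    also have "\<dots> = 4/\<theta> * (\<Sum>k<M. \<Sum>j<M. (cmod (Cyhat$$(k,j) - Cy$$(k,j)))\<^sup>2) + 8 * \<epsilon>I\<^sup>2 / \<theta>^4 * fs Cy"
      unfolding fs_def using Cy by (simp add: sum_distrib_left sum.distrib)
    also have "\<dots> \<le> 4/\<theta> * \<epsilon>F\<^sup>2 + 8 / \<theta>^4 * (\<epsilon>F\<^sup>2 / 10000)"
    proof (intro add_mono)
      show "4/\<theta> * (\<Sum>k<M. \<Sum>j<M. (cmod (Cyhat$$(k,j) - Cy$$(k,j)))\<^sup>2) \<le> 4/\<theta> * \<epsilon>F\<^sup>2"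
        using fsE th0 by (intro mult_left_mono) auto
      have "8 * \<epsilon>I\<^sup>2 / \<theta>^4 * fs Cy = 8 / \<theta>^4 * (\<epsilon>I\<^sup>2 * fs Cy)" by simp
      also have "\<dots> \<le> 8 / \<theta>^4 * (\<epsilon>F\<^sup>2 / 10000)" using eI1sq th0 by (intro mult_left_mono) auto
      finally show "8 * \<epsilon>I\<^sup>2 / \<theta>^4 * fs Cy \<le> 8 / \<theta>^4 * (\<epsilon>F\<^sup>2 / 10000)" .
    qed
    also have "\<dots> \<le> 4/\<theta>^4 * \<epsilon>F\<^sup>2 + 1/\<theta>^4 * \<epsilon>F\<^sup>2"
    proof (intro add_mono)
      have "\<theta>^4 \<le> \<theta>" using th0 th1 by (metis less_imp_le power_decreasing power_one_right one_le_numeral)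
      thus "4/\<theta> * \<epsilon>F\<^sup>2 \<le> 4/\<theta>^4 * \<epsilon>F\<^sup>2" using th0 by (intro mult_right_mono divide_left_mono) auto
      show "8 / \<theta>^4 * (\<epsilon>F\<^sup>2 / 10000) \<le> 1/\<theta>^4 * \<epsilon>F\<^sup>2" using th0 by (simp add: field_simps)
    qed
    also have "\<dots> = 5 * \<epsilon>F\<^sup>2 / \<theta>^4" by (simp add: field_simps)
    finally show ?thesis .
  qed
  have opX: "nsq ((Ch * mat_adjoint A * G) *\<^sub>v u) \<le> (op_norm Ch)\<^sup>2 / \<theta>^3 * nsq u"
    if u: "u \<in> carrier_vec M" for u
  proof -
    have Gu: "G *\<^sub>v u \<in> carrier_vec M" using Gc u by simp
    have AGu: "mat_adjoint A *\<^sub>v (G *\<^sub>v u) \<in> carrier_vec M" using adjAc Gu by simp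
    have "(Ch * mat_adjoint A * G) *\<^sub>v u = Ch *\<^sub>v (mat_adjoint A *\<^sub>v (G *\<^sub>v u))"
      using assoc_mult_mat_vec[OF Yc Gc u] assoc_mult_mat_vec[OF Ch adjAc Gu] by simp
    hence "nsq ((Ch * mat_adjoint A * G) *\<^sub>v u) \<le> (op_norm Ch)\<^sup>2 * nsq (mat_adjoint A *\<^sub>v (G *\<^sub>v u))"
      using op_norm_bound[OF Ch AGu] by simp
    also have "\<dots> \<le> (op_norm Ch)\<^sup>2 * (1/\<theta> * nsq (G *\<^sub>v u))"
    proof (intro mult_left_mono diag_bound[OF adjAc _ _ Gu])
      show "mat_adjoint A $$ (i, j) = 0" if "i < M" "j < M" "i \<noteq> j" for i j using adjA_ent that by simp
      show "(cmod (mat_adjoint A $$ (i, i)))\<^sup>2 \<le> 1/\<theta>" if "i < M" for i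
      proof -
        have e: "mat_adjoint A $$ (i, i) = complex_of_real (s / sqrt (d i))"
          using adjA_ent[OF that that] by (simp del: of_real_divide)
        have "cmod (mat_adjoint A $$ (i, i)) = s / sqrt (d i)"
          unfolding e norm_of_real using s0 dpos[OF that] by simp
        hence "(cmod (mat_adjoint A $$ (i, i)))\<^sup>2 = s\<^sup>2 / d i"
          using dpos[OF that] by (simp add: power_divide)
        also have "\<dots> \<le> 1 / d i" using s0 dpos[OF that] by (intro divide_right_mono) auto
        also have "\<dots> \<le> 1/\<theta>" using dge[OF that] th0 by (intro divide_left_mono) auto
        finally show ?thesis .
      qed
    qed auto
    also have "\<dots> \<le> (op_norm Ch)\<^sup>2 * (1/\<theta> * (1/\<theta>\<^sup>2 * nsq u))"
      using inv_bound[OF Crc Gc CrG th0 lb u] th0 by (intro mult_left_mono) auto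
    also have "\<dots> = (op_norm Ch)\<^sup>2 / \<theta>^3 * nsq u" by (simp add: field_simps power2_eq_square power3_eq_cube)
    finally show ?thesis .
  qed
  have Xc: "Ch * mat_adjoint A * G \<in> carrier_mat M M" using Yc Gc by simp
  have Xhc: "Chhat * mat_adjoint Ahat * Gh \<in> carrier_mat M M" using Yhc Ghc by simp
  have swp: "(\<Sum>k<M. nsq ((Cr - Crhat) *\<^sub>v vec M (\<lambda>j. cnj ((Ch * mat_adjoint A * G)$$(k,j)))))
      \<le> (op_norm Ch)\<^sup>2 / \<theta>^3 * fs (Cr - Crhat)"
    by (rule swap_bound[OF Dc Xc opX])
  have concl4: "\<forall>(P::complex vec measure) (r::complex vec \<Rightarrow> complex vec).
          (prob_space P \<and>
           (\<forall>\<omega>\<in>space P. r \<omega> \<in> carrier_vec M) \<and>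
           (\<forall>i<M. (\<lambda>\<omega>. r \<omega> $ i) \<in> borel_measurable P \<and>
                   integrable P (\<lambda>\<omega>. (cmod (r \<omega> $ i))\<^sup>2)) \<and>
           (\<forall>i<M. \<forall>j<M. (LINT \<omega>|P. r \<omega> $ i * cnj (r \<omega> $ j)) = Cr $$ (i,j)))
          \<longrightarrow>
          (integrable P (\<lambda>\<omega>. (vec_norm ((Chhat * mat_adjoint Ahat * mat_inv Crhat) *\<^sub>v r \<omega>
                 - (Ch * mat_adjoint A * mat_inv Cr) *\<^sub>v r \<omega>))\<^sup>2) \<and>
              (LINT \<omega>|P. (vec_norm ((Chhat * mat_adjoint Ahat * mat_inv Crhat) *\<^sub>v r \<omega>
                 - (Ch * mat_adjoint A * mat_inv Cr) *\<^sub>v r \<omega>))\<^sup>2)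
                \<le> 20 * \<theta> powi (-6) * max 1 (op_norm Ch) * fro_norm Ch * \<epsilon>F)"
    unfolding G_def[symmetric] Gh_def[symmetric]
  proof (intro allI impI)
    fix P :: "complex vec measure" and r :: "complex vec \<Rightarrow> complex vec"
    assume H: "prob_space P \<and>
           (\<forall>\<omega>\<in>space P. r \<omega> \<in> carrier_vec M) \<and>
           (\<forall>i<M. (\<lambda>\<omega>. r \<omega> $ i) \<in> borel_measurable P \<and>
                   integrable P (\<lambda>\<omega>. (cmod (r \<omega> $ i))\<^sup>2)) \<and>
           (\<forall>i<M. \<forall>j<M. (LINT \<omega>|P. r \<omega> $ i * cnj (r \<omega> $ j)) = Cr $$ (i,j))"
    hence rc: "\<forall>\<omega>\<in>space P. r \<omega> \<in> carrier_vec M"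
      and meas: "\<forall>i<M. (\<lambda>\<omega>. r \<omega> $ i) \<in> borel_measurable P \<and> integrable P (\<lambda>\<omega>. (cmod (r \<omega> $ i))\<^sup>2)"
      and cov: "\<forall>i<M. \<forall>j<M. (LINT \<omega>|P. r \<omega> $ i * cnj (r \<omega> $ j)) = Cr $$ (i,j)" by auto
    define Dm where "Dm = Chhat * mat_adjoint Ahat * Gh - Ch * mat_adjoint A * G"
    have Dmc: "Dm \<in> carrier_mat M M" unfolding Dm_def using Xc by (rule minus_carrier_mat)
    have pw: "(vec_norm ((Chhat * mat_adjoint Ahat * Gh) *\<^sub>v r \<omega> - (Ch * mat_adjoint A * G) *\<^sub>v r \<omega>))\<^sup>2
        = nsq (Dm *\<^sub>v r \<omega>)" if w: "\<omega> \<in> space P" for \<omega>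
    proof -
      have rw: "r \<omega> \<in> carrier_vec M" using rc w by auto
      have "(Chhat * mat_adjoint Ahat * Gh) *\<^sub>v r \<omega> - (Ch * mat_adjoint A * G) *\<^sub>v r \<omega> = Dm *\<^sub>v r \<omega>"
        unfolding Dm_def by (rule minus_mult_distrib_mat_vec[OF Xhc Xc rw, symmetric])
      thus ?thesis unfolding vec_norm_nsq by simp
    qed
    note EQ = expect_quad[OF rc meas cov Dmc]
    have int: "integrable P (\<lambda>\<omega>. (vec_norm ((Chhat * mat_adjoint Ahat * Gh) *\<^sub>v r \<omega> - (Ch * mat_adjoint A * G) *\<^sub>v r \<omega>))\<^sup>2)"
      using EQ[THEN conjunct1] by (rule Bochner_Integration.integrable_cong[THEN iffD1, OF refl, rotated]) (simp add: pw)
    have "(LINT \<omega>|P. (vec_norm ((Chhat * mat_adjoint Ahat * Gh) *\<^sub>v r \<omega> - (Ch * mat_adjoint A * G) *\<^sub>v r \<omega>))\<^sup>2)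
        = (LINT \<omega>|P. nsq (Dm *\<^sub>v r \<omega>))"
      by (rule Bochner_Integration.integral_cong) (simp_all add: pw)
    also have "\<dots> = (\<Sum>k<M. Re (qf Cr (vec M (\<lambda>j. cnj (Dm$$(k,j))))))" using EQ by simp
    also have "\<dots> \<le> 8/\<theta> * (fs (Chhat * mat_adjoint Ahat - Ch * mat_adjoint A)
        + (\<Sum>k<M. nsq ((Cr - Crhat) *\<^sub>v vec M (\<lambda>j. cnj ((Ch * mat_adjoint A * G)$$(k,j))))))"
      unfolding Dm_def by (rule sum_bound[OF th0 Crc Crhc Gc Ghc Yc Yhc hCr hCrh lb fsd GCr GhCrh])
    also have "\<dots> \<le> 8/\<theta> * (5 * \<epsilon>F\<^sup>2 / \<theta>^4 + (op_norm Ch)\<^sup>2 / \<theta>^3 * (34 * \<epsilon>F\<^sup>2 / \<theta>^6))"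
    proof (intro mult_left_mono add_mono)
      show "(\<Sum>k<M. nsq ((Cr - Crhat) *\<^sub>v vec M (\<lambda>j. cnj ((Ch * mat_adjoint A * G)$$(k,j)))))
          \<le> (op_norm Ch)\<^sup>2 / \<theta>^3 * (34 * \<epsilon>F\<^sup>2 / \<theta>^6)"
        using swp fsD th0 by (meson divide_nonneg_pos mult_left_mono order_trans zero_le_power2 zero_less_power)
    qed (use fsY th0 in auto)
    also have "\<dots> \<le> 20 * \<theta> powi (-6) * max 1 (op_norm Ch) * fro_norm Ch * \<epsilon>F"
      by (rule final_arith[OF th0 th1 eF0 _ opCh0 op_norm_le_fro[OF Ch] refl eF1 eF2 order_refl])
        (simp add: fro_norm_fs)
    finally show "integrable P (\<lambda>\<omega>. (vec_norm ((Chhat * mat_adjoint Ahat * Gh) *\<^sub>v r \<omega> - (Ch * mat_adjoint A * G) *\<^sub>v r \<omega>))\<^sup>2) \<and>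
       (LINT \<omega>|P. (vec_norm ((Chhat * mat_adjoint Ahat * Gh) *\<^sub>v r \<omega> - (Ch * mat_adjoint A * G) *\<^sub>v r \<omega>))\<^sup>2)
         \<le> 20 * \<theta> powi (-6) * max 1 (op_norm Ch) * fro_norm Ch * \<epsilon>F" using int by simp
  qed
  show ?thesis using concl1 concl2 concl3 concl4 by blast
qed

theorem lemma1:
  shows "\<exists>c1 c2 C :: real. c1 > 0 \<and> c2 > 0 \<and> C > 0 \<and>
    (\<forall>(M::nat) (N0::real) (Ch::complex mat) (Cyhat::complex mat) (\<theta>::real) (\<epsilon>F::real) (\<epsilon>I::real).
      let Cy = Ch + complex_of_real N0 \<cdot>\<^sub>m 1\<^sub>m M;
          Cr = P_arcsine Cy;
          A = complex_of_real (sqrt (2 / pi)) \<cdot>\<^sub>m diag_inv_sqrt Cy;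
          Chhat = Cyhat - complex_of_real N0 \<cdot>\<^sub>m 1\<^sub>m M;
          Ahat = complex_of_real (sqrt (2 / pi)) \<cdot>\<^sub>m diag_inv_sqrt Cyhat;
          Crhat = P_arcsine Cyhat
      in
      (N0 > 0 \<and> Ch \<in> carrier_mat M M \<and> psd_mat Ch \<and>
       0 < \<theta> \<and> \<theta> < 1 \<and>
       (\<forall>i<M. \<forall>j<M. i \<noteq> j \<longrightarrow>
          cmod ((diag_inv_sqrt Cy * Cy * diag_inv_sqrt Cy) $$ (i,j)) \<le> 1 - \<theta>) \<and>
       (\<forall>i<M. cmod (Cy $$ (i,i)) \<ge> \<theta>) \<and>
       lambda_min Cr \<ge> \<theta> \<and>
       Cyhat \<in> carrier_mat M M \<and> hermitian_mat Cyhat \<and>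
       \<epsilon>F > 0 \<and> \<epsilon>I > 0 \<and>
       fro_norm (Cyhat - Cy) < \<epsilon>F \<and> max_norm (Cyhat - Cy) < \<epsilon>I \<and>
       \<epsilon>I \<le> c1 * Min {\<epsilon>F / fro_norm Cy, \<theta> ^ 3 / max_norm Cy, \<theta>, 1} \<and>
       \<epsilon>F \<le> c2 * min (\<theta> ^ 4) (\<theta> ^ 6 * fro_norm Ch / (max 1 (op_norm Ch) * op_norm Cy)))
      \<longrightarrow>
      ((\<forall>i<M. Re (Cyhat $$ (i,i)) > 0) \<and>
       (\<forall>i<M. \<forall>j<M.
          \<bar>Re (Cyhat $$ (i,j)) / (sqrt (Re (Cyhat $$ (i,i))) * sqrt (Re (Cyhat $$ (j,j))))\<bar> \<le> 1 \<and>
          \<bar>Im (Cyhat $$ (i,j)) / (sqrt (Re (Cyhat $$ (i,i))) * sqrt (Re (Cyhat $$ (j,j))))\<bar> \<le> 1) \<and>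
       invertible_mat Crhat \<and>
       (\<forall>(P::complex vec measure) (r::complex vec \<Rightarrow> complex vec).
          (prob_space P \<and>
           (\<forall>\<omega>\<in>space P. r \<omega> \<in> carrier_vec M) \<and>
           (\<forall>i<M. (\<lambda>\<omega>. r \<omega> $ i) \<in> borel_measurable P \<and>
                   integrable P (\<lambda>\<omega>. (cmod (r \<omega> $ i))\<^sup>2)) \<and>
           (\<forall>i<M. \<forall>j<M. (LINT \<omega>|P. r \<omega> $ i * cnj (r \<omega> $ j)) = Cr $$ (i,j)))
          \<longrightarrow>
          (let hBLM = (\<lambda>\<omega>. (Ch * mat_adjoint A * mat_inv Cr) *\<^sub>v r \<omega>);
               hhat = (\<lambda>\<omega>. (Chhat * mat_adjoint Ahat * mat_inv Crhat) *\<^sub>v r \<omega>)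
           in integrable P (\<lambda>\<omega>. (vec_norm (hhat \<omega> - hBLM \<omega>))\<^sup>2) \<and>
              (LINT \<omega>|P. (vec_norm (hhat \<omega> - hBLM \<omega>))\<^sup>2)
                \<le> C * \<theta> powi (-6) * max 1 (op_norm Ch) * fro_norm Ch * \<epsilon>F))))"
proof -
  have X: "\<forall>(M::nat) (N0::real) (Ch::complex mat) (Cyhat::complex mat) (\<theta>::real) (\<epsilon>F::real) (\<epsilon>I::real).
      let Cy = Ch + complex_of_real N0 \<cdot>\<^sub>m 1\<^sub>m M;
          Cr = P_arcsine Cy;
          A = complex_of_real (sqrt (2 / pi)) \<cdot>\<^sub>m diag_inv_sqrt Cy;
          Chhat = Cyhat - complex_of_real N0 \<cdot>\<^sub>m 1\<^sub>m M;
          Ahat = complex_of_real (sqrt (2 / pi)) \<cdot>\<^sub>m diag_inv_sqrt Cyhat;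
          Crhat = P_arcsine Cyhat
      in
      (N0 > 0 \<and> Ch \<in> carrier_mat M M \<and> psd_mat Ch \<and>
       0 < \<theta> \<and> \<theta> < 1 \<and>
       (\<forall>i<M. \<forall>j<M. i \<noteq> j \<longrightarrow>
          cmod ((diag_inv_sqrt Cy * Cy * diag_inv_sqrt Cy) $$ (i,j)) \<le> 1 - \<theta>) \<and>
       (\<forall>i<M. cmod (Cy $$ (i,i)) \<ge> \<theta>) \<and>
       lambda_min Cr \<ge> \<theta> \<and>
       Cyhat \<in> carrier_mat M M \<and> hermitian_mat Cyhat \<and>
       \<epsilon>F > 0 \<and> \<epsilon>I > 0 \<and>
       fro_norm (Cyhat - Cy) < \<epsilon>F \<and> max_norm (Cyhat - Cy) < \<epsilon>I \<and>
       \<epsilon>I \<le> 1/100 * Min {\<epsilon>F / fro_norm Cy, \<theta> ^ 3 / max_norm Cy, \<theta>, 1} \<and>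
       \<epsilon>F \<le> 1/20 * min (\<theta> ^ 4) (\<theta> ^ 6 * fro_norm Ch / (max 1 (op_norm Ch) * op_norm Cy)))
      \<longrightarrow>
      ((\<forall>i<M. Re (Cyhat $$ (i,i)) > 0) \<and>
       (\<forall>i<M. \<forall>j<M.
          \<bar>Re (Cyhat $$ (i,j)) / (sqrt (Re (Cyhat $$ (i,i))) * sqrt (Re (Cyhat $$ (j,j))))\<bar> \<le> 1 \<and>
          \<bar>Im (Cyhat $$ (i,j)) / (sqrt (Re (Cyhat $$ (i,i))) * sqrt (Re (Cyhat $$ (j,j))))\<bar> \<le> 1) \<and>
       invertible_mat Crhat \<and>
       (\<forall>(P::complex vec measure) (r::complex vec \<Rightarrow> complex vec).
          (prob_space P \<and>
           (\<forall>\<omega>\<in>space P. r \<omega> \<in> carrier_vec M) \<and>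
           (\<forall>i<M. (\<lambda>\<omega>. r \<omega> $ i) \<in> borel_measurable P \<and>
                   integrable P (\<lambda>\<omega>. (cmod (r \<omega> $ i))\<^sup>2)) \<and>
           (\<forall>i<M. \<forall>j<M. (LINT \<omega>|P. r \<omega> $ i * cnj (r \<omega> $ j)) = Cr $$ (i,j)))
          \<longrightarrow>
          (let hBLM = (\<lambda>\<omega>. (Ch * mat_adjoint A * mat_inv Cr) *\<^sub>v r \<omega>);
               hhat = (\<lambda>\<omega>. (Chhat * mat_adjoint Ahat * mat_inv Crhat) *\<^sub>v r \<omega>)
           in integrable P (\<lambda>\<omega>. (vec_norm (hhat \<omega> - hBLM \<omega>))\<^sup>2) \<and>
              (LINT \<omega>|P. (vec_norm (hhat \<omega> - hBLM \<omega>))\<^sup>2)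
                \<le> 20 * \<theta> powi (-6) * max 1 (op_norm Ch) * fro_norm Ch * \<epsilon>F)))"
    unfolding Let_def by (intro allI impI main[OF refl refl refl refl refl refl])
  show ?thesis
    apply (rule exI[of _ "1/100"], rule exI[of _ "1/20"], rule exI[of _ "20"])
    apply (intro conjI)
       apply simp
      apply simp
     apply simp
    apply (rule X)
    done
qed

end
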